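(* Let $0<\alpha<1$, let $H$ be an $\alpha$-stable subordinator, i.e. $\mathbf{E}_0[e^{-\lambda H_t}]=e^{-t\lambda^\alpha}$ for $\lambda>0$, and let $L_t=\inf\{s\ge0: H_s>t\}$ be its inverse. (i) If $0<\beta<1/\alpha$, then $\mathbf{E}_0[(L_t)^\beta]=\frac{\Gamma(\beta+1)}{\Gamma(\beta\alpha+1)}t^{\alpha\beta}$ for all $t>0$. (ii) Let $X$ be a Markov process on a domain $D$ with lifetime $\zeta$, independent of $H$, and let $\zeta^L$ be the lifetime of the time-changed process $X^L=X\circ L$. If $0<\beta<\alpha$ and $\mathbf{E}_x[\zeta^{\beta/\alpha}]<\infty$, then $$\mathbf{P}_x(\zeta^L>t)\le\left(\frac{\Gamma(1-\beta/\alpha)}{\Gamma(1-\beta)}\,\mathbf{E}_x[\zeta^{\beta/\alpha}]\right)t^{-\beta},\qquad t>0.$$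
   Context: The lifetime of $X$ is $\zeta=\inf\{t>0: X_t\notin D\}$ (after which $X$ sits in a cemetery point); $X^L_t=X_{L_t}$ and $\zeta^L$ is its lifetime. *)

theory Defs
  imports "HOL-Analysis.Analysis" "HOL-Probability.Probability"
begin

definition epow :: "ennreal \<Rightarrow> real \<Rightarrow> ennreal" where
  "epow z p = (if z = \<top> then \<top> else ennreal (enn2real z powr p))"

definition stable_subordinator :: "'w measure \<Rightarrow> real \<Rightarrow> (real \<Rightarrow> 'w \<Rightarrow> real) \<Rightarrow> bool" where
  "stable_subordinator M \<alpha> H \<longleftrightarrow>
     prob_space M \<and>
     (\<forall>t. H t \<in> borel_measurable M) \<and>
     (\<forall>\<omega>\<in>space M. H 0 \<omega> = 0) \<and>
     (\<forall>\<omega>\<in>space M. mono_on {0..} (\<lambda>t. H t \<omega>)) \<and>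
     (\<forall>\<omega>\<in>space M. \<forall>t\<ge>0. continuous (at_right t) (\<lambda>s. H s \<omega>)) \<and>
     (\<forall>(ts :: nat \<Rightarrow> real) n. 0 \<le> ts 0 \<and> mono ts \<longrightarrow>
        prob_space.indep_vars M (\<lambda>_. borel) (\<lambda>i \<omega>. H (ts (Suc i)) \<omega> - H (ts i) \<omega>) {..<n}) \<and>
     (\<forall>s t. 0 \<le> s \<and> 0 \<le> t \<longrightarrow>
        distr M borel (\<lambda>\<omega>. H (s + t) \<omega> - H s \<omega>) = distr M borel (H t)) \<and>
     (\<forall>t\<ge>0. \<forall>l>0. (\<integral>\<omega>. exp (- l * H t \<omega>) \<partial>M) = exp (- t * l powr \<alpha>))"

definition inverse_subordinator :: "(real \<Rightarrow> 'w \<Rightarrow> real) \<Rightarrow> real \<Rightarrow> 'w \<Rightarrow> ennreal" where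
  "inverse_subordinator H t \<omega> = Inf {ennreal s | s. 0 \<le> s \<and> H s \<omega> > t}"

definition lifetime :: "'d set \<Rightarrow> (real \<Rightarrow> 'w \<Rightarrow> 'd) \<Rightarrow> 'w \<Rightarrow> ennreal" where
  "lifetime D X \<omega> = Inf {ennreal t | t. 0 < t \<and> X t \<omega> \<notin> D}"

(* time-changed process X^L_t = X_{L_t}; at L_t = \<infinity> the process is in the cemetery c *)
definition time_change :: "'d \<Rightarrow> (real \<Rightarrow> 'w \<Rightarrow> 'd) \<Rightarrow> (real \<Rightarrow> 'w \<Rightarrow> real) \<Rightarrow> real \<Rightarrow> 'w \<Rightarrow> 'd" where
  "time_change c X H t \<omega> =
     (if inverse_subordinator H t \<omega> = \<top> then c
      else X (enn2real (inverse_subordinator H t \<omega>)) \<omega>)"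

definition natural_filtration :: "'w measure \<Rightarrow> 'd measure \<Rightarrow> (real \<Rightarrow> 'w \<Rightarrow> 'd) \<Rightarrow> real \<Rightarrow> 'w measure" where
  "natural_filtration M S X s =
     sigma (space M) (\<Union>u\<in>{0..s}. {X u -` A \<inter> space M | A. A \<in> sets S})"

definition markov_process :: "('d \<Rightarrow> 'w measure) \<Rightarrow> 'd measure \<Rightarrow> (real \<Rightarrow> 'w \<Rightarrow> 'd) \<Rightarrow> bool" where
  "markov_process P S X \<longleftrightarrow>
     (\<forall>x\<in>space S. prob_space (P x)) \<and>
     (\<forall>x\<in>space S. \<forall>y\<in>space S. sets (P x) = sets (P y)) \<and>
     (\<forall>x\<in>space S. \<forall>t\<ge>0. X t \<in> measurable (P x) S) \<and>
     (\<forall>x\<in>space S. AE \<omega> in P x. X 0 \<omega> = x) \<and>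
     (\<forall>y\<in>space S. \<forall>A\<in>sets (P y). (\<lambda>x. emeasure (P x) A) \<in> borel_measurable S) \<and>
     (\<forall>x\<in>space S. \<forall>s\<ge>0. \<forall>t\<ge>0. \<forall>f::'d \<Rightarrow> real. f \<in> borel_measurable S \<and> bounded (range f) \<longrightarrow>
        (AE \<omega> in P x. real_cond_exp (P x) (natural_filtration (P x) S X s) (\<lambda>\<omega>. f (X (s + t) \<omega>)) \<omega>
                       = (\<integral>\<omega>'. f (X t \<omega>') \<partial>(P (X s \<omega>)))))"

definition independent_processes ::
  "'w measure \<Rightarrow> 'd measure \<Rightarrow> (real \<Rightarrow> 'w \<Rightarrow> 'd) \<Rightarrow> 'e measure \<Rightarrow> (real \<Rightarrow> 'w \<Rightarrow> 'e) \<Rightarrow> bool" where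
  "independent_processes M S X T Y \<longleftrightarrow>
     prob_space.indep_set M
       (sets (vimage_algebra (space M) (\<lambda>\<omega>. \<lambda>t\<in>{0..}. X t \<omega>) (PiM {0..} (\<lambda>_. S))))
       (sets (vimage_algebra (space M) (\<lambda>\<omega>. \<lambda>t\<in>{0..}. Y t \<omega>) (PiM {0..} (\<lambda>_. T))))"

end

theory Submission
  imports Defs
begin

lemma SUP_indicator_incseq:
  assumes "incseq A"
  shows "(SUP n. indicator (A n) x :: ennreal) = indicator (\<Union>n. A n) x"
proof (cases "x \<in> (\<Union>n. A n)")
  case True
  then obtain m where m: "x \<in> A m" by auto
  have "(SUP n. indicator (A n) x :: ennreal) = 1"
  proof (rule antisym)
    show "(SUP n. indicator (A n) x :: ennreal) \<le> 1"
      by (intro SUP_least) (auto simp: indicator_def)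
    show "1 \<le> (SUP n. indicator (A n) x :: ennreal)"
      using m by (intro SUP_upper2[of m]) auto
  qed
  then show ?thesis using True by simp
next
  case False
  then show ?thesis by (auto simp: indicator_def)
qed

lemma incseq_mult_indicator:
  assumes "incseq A"
  shows "incseq (\<lambda>n x. (c x :: ennreal) * indicator (A n) x)"
  unfolding incseq_def le_fun_def
proof (intro allI impI)
  fix m n :: nat and x assume "m \<le> n"
  then have "A m \<subseteq> A n" using assms by (auto simp: incseq_def)
  then have "indicator (A m) x \<le> (indicator (A n) x :: ennreal)"
    by (auto simp: indicator_def)
  then show "c x * indicator (A m) x \<le> c x * indicator (A n) x"
    by (rule mult_left_mono) simp
qed

lemma nn_integral_powr_subst:
  fixes f :: "real \<Rightarrow> real" and r :: real
  assumes f[measurable]: "f \<in> borel_measurable borel" and r: "r > 0"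
  shows "(\<integral>\<^sup>+x. ennreal (f x) * indicator {0<..} x \<partial>lborel) =
         (\<integral>\<^sup>+x. ennreal (f (x powr r) * (r * x powr (r - 1))) * indicator {0<..} x \<partial>lborel)"
proof -
  define a where "a n = 1 / real (Suc n)" for n
  define b where "b n = real (Suc n)" for n
  have ab: "a n \<le> b n" "0 < a n" for n by (auto simp: a_def b_def field_simps)
  have inca: "a m \<ge> a n" if "m \<le> n" for m n using that
    by (auto simp: a_def field_simps)
  have incb: "b m \<le> b n" if "m \<le> n" for m n using that by (auto simp: b_def)
  have U1: "(\<Union>n. {a n..b n}) = {0<..}"
  proof (intro equalityI subsetI)
    fix x :: real assume "x \<in> {0<..}"
    then have x: "x > 0" by simp
    obtain n1 :: nat where n1: "1 / x < n1" using reals_Archimedean2 by blast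
    obtain n2 :: nat where n2: "x < n2" using reals_Archimedean2 by blast
    let ?n = "n1 + n2"
    have "x * real n2 \<ge> 0" using x by simp
    moreover have "1 < x * real n1" using n1 x by (simp add: field_simps)
    ultimately have "1 \<le> x + (x * real n1 + x * real n2)" using x by linarith
    then have "a ?n \<le> x" using x unfolding a_def by (simp add: field_simps)
    moreover have "x \<le> b ?n" using n2 unfolding b_def by simp
    ultimately show "x \<in> (\<Union>n. {a n..b n})" by auto
  qed (use ab in \<open>auto intro: less_le_trans\<close>)
  have U2: "(\<Union>n. {a n powr r..b n powr r}) = {0<..}"
  proof (intro equalityI subsetI)
    fix y :: real assume "y \<in> {0<..}"
    then have y: "y > 0" by simp
    then have "y powr (1/r) \<in> (\<Union>n. {a n..b n})" using U1 by simp
    then obtain n where "a n \<le> y powr (1/r)" "y powr (1/r) \<le> b n" by auto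
    then have "a n powr r \<le> (y powr (1/r)) powr r" "(y powr (1/r)) powr r \<le> b n powr r"
      using ab[of n] r y by (auto intro!: powr_mono2)
    then show "y \<in> (\<Union>n. {a n powr r..b n powr r})" using r y by (auto simp: powr_powr)
  next
    fix y assume "y \<in> (\<Union>n. {a n powr r..b n powr r})"
    then obtain n where "a n powr r \<le> y" by auto
    moreover have "0 < a n powr r" using ab[of n] by simp
    ultimately have "0 < y" by linarith
    then show "y \<in> {0<..}" by simp
  qed
  have mono1: "incseq (\<lambda>n. {a n..b n})"
    by (auto simp: incseq_def intro: order.trans[OF inca] order.trans[OF _ incb])
  have mono2: "incseq (\<lambda>n. {a n powr r..b n powr r})"
  proof (unfold incseq_def, intro allI impI subsetI)
    fix m n :: nat and y assume mn: "m \<le> n" and y: "y \<in> {a m powr r..b m powr r}"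
    have "a n powr r \<le> a m powr r" using inca[OF mn] ab[of n] r by (intro powr_mono2) auto
    moreover have "b m powr r \<le> b n powr r" using incb[OF mn] ab[of m] r by (intro powr_mono2) auto
    ultimately show "y \<in> {a n powr r..b n powr r}" using y by auto
  qed
  have eq: "(\<integral>\<^sup>+x. ennreal (f x) * indicator {a n powr r..b n powr r} x \<partial>lborel) =
            (\<integral>\<^sup>+x. ennreal (f (x powr r) * (r * x powr (r - 1))) * indicator {a n..b n} x \<partial>lborel)" for n
  proof -
    have "(\<integral>\<^sup>+x. ennreal (f x) * indicator {a n powr r..b n powr r} x \<partial>lborel) =
          (\<integral>\<^sup>+x. ennreal (f x * indicator {a n powr r..b n powr r} x) \<partial>lborel)"
      by (intro nn_integral_cong) (auto simp: indicator_def)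
    also have "\<dots> = (\<integral>\<^sup>+x. ennreal (f (x powr r) * (r * x powr (r - 1)) * indicator {a n..b n} x) \<partial>lborel)"
      using ab[of n] r
      by (intro nn_integral_substitution[where g = "\<lambda>x. x powr r"])
         (auto intro!: has_real_derivative_powr continuous_intros simp: set_borel_measurable_def)
    also have "\<dots> = (\<integral>\<^sup>+x. ennreal (f (x powr r) * (r * x powr (r - 1))) * indicator {a n..b n} x \<partial>lborel)"
      by (intro nn_integral_cong) (auto simp: indicator_def)
    finally show ?thesis .
  qed
  have "(\<integral>\<^sup>+x. ennreal (f x) * indicator {0<..} x \<partial>lborel) =
        (\<integral>\<^sup>+x. (SUP n. ennreal (f x) * indicator {a n powr r..b n powr r} x) \<partial>lborel)"
    by (intro nn_integral_cong)
       (simp add: SUP_mult_left_ennreal[symmetric] SUP_indicator_incseq[OF mono2] U2)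
  also have "\<dots> = (SUP n. \<integral>\<^sup>+x. ennreal (f x) * indicator {a n powr r..b n powr r} x \<partial>lborel)"
    by (intro nn_integral_monotone_convergence_SUP)
       (use incseq_mult_indicator[OF mono2] in auto)
  also have "\<dots> = (SUP n. \<integral>\<^sup>+x. ennreal (f (x powr r) * (r * x powr (r - 1))) * indicator {a n..b n} x \<partial>lborel)"
    by (simp add: eq)
  also have "\<dots> = (\<integral>\<^sup>+x. (SUP n. ennreal (f (x powr r) * (r * x powr (r - 1))) * indicator {a n..b n} x) \<partial>lborel)"
    by (intro nn_integral_monotone_convergence_SUP[symmetric])
       (use incseq_mult_indicator[OF mono1] in auto)
  also have "\<dots> = (\<integral>\<^sup>+x. ennreal (f (x powr r) * (r * x powr (r - 1))) * indicator {0<..} x \<partial>lborel)"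
    by (intro nn_integral_cong)
       (simp add: SUP_mult_left_ennreal[symmetric] SUP_indicator_incseq[OF mono1] U1)
  finally show ?thesis .
qed

lemma Gamma_nn_pos:
  assumes "c > 0"
  shows "(\<integral>\<^sup>+x. ennreal (x powr (c - 1) * exp (- x)) * indicator {0<..} x \<partial>lborel) = ennreal (Gamma c)"
  unfolding Gamma_conv_nn_integral_real[OF assms]
  by (intro nn_integral_cong) (auto simp: indicator_def exp_minus divide_inverse)

lemma Gamma_nn_scaled:
  assumes c: "c > 0" and u: "u > 0"
  shows "(\<integral>\<^sup>+x. ennreal (x powr (c - 1) * exp (- u * x)) * indicator {0<..} x \<partial>lborel)
          = ennreal (Gamma c * u powr (- c))"
proof -
  let ?g = "\<lambda>x. ennreal (x powr (c - 1) * exp (- u * x)) * indicator {0<..} x"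
  have "(\<integral>\<^sup>+x. ?g x \<partial>lborel) = ennreal \<bar>1/u\<bar> * (\<integral>\<^sup>+x. ?g (0 + (1/u) * x) \<partial>lborel)"
    using u by (intro nn_integral_real_affine) (auto)
  also have "(\<lambda>x. ?g (0 + (1/u) * x)) = (\<lambda>x. ennreal (u powr (1 - c)) * (ennreal (x powr (c - 1) * exp (- x)) * indicator {0<..} x))"
  proof
    fix x :: real
    show "?g (0 + (1/u) * x) = ennreal (u powr (1 - c)) * (ennreal (x powr (c - 1) * exp (- x)) * indicator {0<..} x)"
    proof (cases "x > 0")
      case True
      have e1: "u powr (1 - c) = 1 / u powr (c - 1)"
        using powr_minus_divide[of u "c - 1"] by simp
      have "(1/u * x) powr (c - 1) = u powr (1 - c) * x powr (c - 1)"
        using u True by (simp add: powr_divide e1)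
      moreover have "- u * (1 / u * x) = - x" using u by simp
      moreover have "0 < 1/u * x" using u True by simp
      ultimately show ?thesis using True u
        by (simp add: ennreal_mult'[symmetric] mult.assoc)
    next
      case False
      then have "\<not> 0 < 1/u * x" using u by (simp add: zero_less_divide_iff)
      then show ?thesis using False by simp
    qed
  qed
  also have "(\<integral>\<^sup>+x. ennreal (u powr (1 - c)) * (ennreal (x powr (c - 1) * exp (- x)) * indicator {0<..} x) \<partial>lborel)
      = ennreal (u powr (1 - c)) * ennreal (Gamma c)"
    by (subst nn_integral_cmult) (auto simp: Gamma_nn_pos[OF c])
  also have "ennreal \<bar>1/u\<bar> * (ennreal (u powr (1 - c)) * ennreal (Gamma c)) = ennreal (1/u * u powr (1 - c) * Gamma c)"
    using u c by (simp add: ennreal_mult'[symmetric] Gamma_real_pos less_imp_le mult.assoc)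
  also have "1/u * u powr (1 - c) = u powr (- c)"
    using u by (simp add: powr_diff powr_minus divide_inverse)
  finally show ?thesis by (simp add: mult.commute)
qed

lemma Gamma_nn_powr:
  assumes g: "\<gamma> > 0" and u: "u > 0" and a: "\<alpha> > 0"
  shows "(\<integral>\<^sup>+x. ennreal (x powr (\<gamma> - 1) * exp (- u * x powr \<alpha>)) * indicator {0<..} x \<partial>lborel)
          = ennreal (Gamma (\<gamma> / \<alpha>) / \<alpha> * u powr (- \<gamma> / \<alpha>))"
proof -
  have "(\<integral>\<^sup>+x. ennreal (x powr (\<gamma> - 1) * exp (- u * x powr \<alpha>)) * indicator {0<..} x \<partial>lborel)
     = (\<integral>\<^sup>+x. ennreal ((x powr (1/\<alpha>)) powr (\<gamma> - 1) * exp (- u * (x powr (1/\<alpha>)) powr \<alpha>) * (1/\<alpha> * x powr (1/\<alpha> - 1))) * indicator {0<..} x \<partial>lborel)"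
    using a by (intro nn_integral_powr_subst) auto
  also have "\<dots> = (\<integral>\<^sup>+x. ennreal (1/\<alpha>) * (ennreal (x powr (\<gamma>/\<alpha> - 1) * exp (- u * x)) * indicator {0<..} x) \<partial>lborel)"
  proof (intro nn_integral_cong)
    fix x :: real
    show "ennreal ((x powr (1/\<alpha>)) powr (\<gamma> - 1) * exp (- u * (x powr (1/\<alpha>)) powr \<alpha>) * (1/\<alpha> * x powr (1/\<alpha> - 1))) * indicator {0<..} x
        = ennreal (1/\<alpha>) * (ennreal (x powr (\<gamma>/\<alpha> - 1) * exp (- u * x)) * indicator {0<..} x)"
    proof (cases "x > 0")
      case True
      have e1: "(x powr (1/\<alpha>)) powr (\<gamma> - 1) = x powr ((\<gamma> - 1) / \<alpha>)" by (simp add: powr_powr)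
      have e2: "(x powr (1/\<alpha>)) powr \<alpha> = x" using a True by (simp add: powr_powr)
      have e3: "x powr ((\<gamma> - 1) / \<alpha>) * x powr (1/\<alpha> - 1) = x powr (\<gamma>/\<alpha> - 1)"
      proof -
        have "(\<gamma> - 1) / \<alpha> + (1/\<alpha> - 1) = \<gamma>/\<alpha> - 1" using a by (simp add: field_simps)
        then show ?thesis by (metis powr_add)
      qed
      have "(x powr (1/\<alpha>)) powr (\<gamma> - 1) * exp (- u * (x powr (1/\<alpha>)) powr \<alpha>) * (1/\<alpha> * x powr (1/\<alpha> - 1))
          = 1/\<alpha> * (x powr (\<gamma>/\<alpha> - 1) * exp (- u * x))"
        unfolding e1 e2 e3[symmetric] by (simp add: mult_ac)
      then show ?thesis using True a by (simp add: ennreal_mult'[symmetric])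
    qed simp
  qed
  also have "\<dots> = ennreal (1/\<alpha>) * ennreal (Gamma (\<gamma>/\<alpha>) * u powr (- (\<gamma>/\<alpha>)))"
    using a g u Gamma_nn_scaled[of "\<gamma>/\<alpha>" u] by (subst nn_integral_cmult) auto
  also have "\<dots> = ennreal (Gamma (\<gamma> / \<alpha>) / \<alpha> * u powr (- \<gamma> / \<alpha>))"
    using a g u by (simp add: ennreal_mult'[symmetric] Gamma_real_pos less_imp_le)
  finally show ?thesis .
qed

lemma powr_integral_0c:
  assumes b: "\<beta> > 0" and c: "c \<ge> 0"
  shows "(\<integral>\<^sup>+x. ennreal (\<beta> * x powr (\<beta> - 1)) * indicator {0<..<c} x \<partial>lborel) = ennreal (c powr \<beta>)"
proof -
  let ?f = "\<lambda>x::real. indicator {..<c powr \<beta>} x :: real"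
  have "(\<integral>\<^sup>+x. ennreal (?f x) * indicator {0<..} x \<partial>lborel) =
        (\<integral>\<^sup>+x. ennreal (?f (x powr \<beta>) * (\<beta> * x powr (\<beta> - 1))) * indicator {0<..} x \<partial>lborel)"
    using b by (intro nn_integral_powr_subst) auto
  also have "(\<lambda>x. ennreal (?f (x powr \<beta>) * (\<beta> * x powr (\<beta> - 1))) * indicator {0<..} x)
      = (\<lambda>x. ennreal (\<beta> * x powr (\<beta> - 1)) * indicator {0<..<c} x)"
  proof
    fix x :: real
    show "ennreal (?f (x powr \<beta>) * (\<beta> * x powr (\<beta> - 1))) * indicator {0<..} x
        = ennreal (\<beta> * x powr (\<beta> - 1)) * indicator {0<..<c} x"
    proof (cases "x > 0")
      case True
      have "x powr \<beta> < c powr \<beta> \<longleftrightarrow> x < c"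
      proof
        assume "x powr \<beta> < c powr \<beta>"
        then show "x < c" using True c b powr_mono2[of \<beta> c x] by (cases "x < c") auto
      next
        assume "x < c" then show "x powr \<beta> < c powr \<beta>" using True b by (intro powr_less_mono2) auto
      qed
      then show ?thesis using True by (auto simp: indicator_def)
    qed (auto simp: indicator_def)
  qed
  finally have "(\<integral>\<^sup>+x. ennreal (\<beta> * x powr (\<beta> - 1)) * indicator {0<..<c} x \<partial>lborel)
      = (\<integral>\<^sup>+x. ennreal (?f x) * indicator {0<..} x \<partial>lborel)" ..
  also have "\<dots> = (\<integral>\<^sup>+x. indicator {0<..<c powr \<beta>} x \<partial>lborel)"
    by (intro nn_integral_cong) (auto simp: indicator_def)
  also have "\<dots> = ennreal (c powr \<beta>)" by simp
  finally show ?thesis .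
qed

lemma exp_integral_0y:
  fixes c y :: real
  assumes c: "c \<ge> 0" and y: "y \<ge> 0"
  shows "(\<integral>\<^sup>+u. ennreal (c * exp (- c * u)) * indicator {0..y} u \<partial>lborel) = ennreal (1 - exp (- c * y))"
proof -
  have "((\<lambda>u. c * exp (- c * u)) has_integral ((- exp (- c * y)) - (- exp (- c * 0)))) {0..y}"
    using y by (intro fundamental_theorem_of_calculus)
       (auto intro!: derivative_eq_intros simp: has_real_derivative_iff_has_vector_derivative[symmetric])
  then have "((\<lambda>u. c * exp (- c * u)) has_integral (1 - exp (- c * y))) {0..y}" by simp
  from nn_integral_has_integral_lebesgue'[OF _ this] c show ?thesis by simp
qed

lemma laplace_powr_integral:
  assumes b: "0 < \<beta>" and ba: "\<beta> < \<alpha>" and s: "s \<ge> 0"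
  shows "(\<integral>\<^sup>+l. ennreal ((1 - exp (- s * l powr \<alpha>)) * l powr (- \<beta> - 1)) * indicator {0<..} l \<partial>lborel)
       = ennreal (Gamma (1 - \<beta> / \<alpha>) / \<beta> * s powr (\<beta> / \<alpha>))"
proof (cases "s = 0")
  case True
  then show ?thesis by simp
next
  case False
  with s have s: "s > 0" by simp
  have a: "\<alpha> > 0" using b ba by simp
  let ?F = "\<lambda>l u. ennreal (l powr \<alpha> * exp (- (l powr \<alpha>) * u) * l powr (- \<beta> - 1)) * indicator {0..s} u * indicator {0<..} l"
  have "(\<integral>\<^sup>+l. ennreal ((1 - exp (- s * l powr \<alpha>)) * l powr (- \<beta> - 1)) * indicator {0<..} l \<partial>lborel)
      = (\<integral>\<^sup>+l. \<integral>\<^sup>+u. ?F l u \<partial>lborel \<partial>lborel)"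
  proof (intro nn_integral_cong)
    fix l :: real
    have "(\<integral>\<^sup>+u. ?F l u \<partial>lborel) = (\<integral>\<^sup>+u. (ennreal (l powr \<alpha> * exp (- (l powr \<alpha>) * u)) * indicator {0..s} u) * (ennreal (l powr (- \<beta> - 1)) * indicator {0<..} l) \<partial>lborel)"
      by (intro nn_integral_cong) (simp add: ennreal_mult' mult_ac)
    also have "\<dots> = (\<integral>\<^sup>+u. ennreal (l powr \<alpha> * exp (- (l powr \<alpha>) * u)) * indicator {0..s} u \<partial>lborel) * (ennreal (l powr (- \<beta> - 1)) * indicator {0<..} l)"
      by (rule nn_integral_multc) simp
    also have "\<dots> = ennreal (1 - exp (- (l powr \<alpha>) * s)) * (ennreal (l powr (- \<beta> - 1)) * indicator {0<..} l)"
      using s by (subst exp_integral_0y) auto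
    also have "\<dots> = ennreal ((1 - exp (- s * l powr \<alpha>)) * l powr (- \<beta> - 1)) * indicator {0<..} l"
      by (simp add: ennreal_mult' mult_ac)
    finally show "ennreal ((1 - exp (- s * l powr \<alpha>)) * l powr (- \<beta> - 1)) * indicator {0<..} l = (\<integral>\<^sup>+u. ?F l u \<partial>lborel)" ..
  qed
  also have "\<dots> = (\<integral>\<^sup>+u. \<integral>\<^sup>+l. ?F l u \<partial>lborel \<partial>lborel)"
    by (rule lborel_pair.Fubini'[symmetric]) measurable
  also have "\<dots> = (\<integral>\<^sup>+u. ennreal (Gamma (1 - \<beta> / \<alpha>) / \<beta>) * (ennreal (\<beta> / \<alpha> * u powr (\<beta> / \<alpha> - 1)) * indicator {0<..<s} u) \<partial>lborel)"
  proof (intro nn_integral_cong_AE)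
    show "AE u in lborel. (\<integral>\<^sup>+l. ?F l u \<partial>lborel) = ennreal (Gamma (1 - \<beta> / \<alpha>) / \<beta>) * (ennreal (\<beta> / \<alpha> * u powr (\<beta> / \<alpha> - 1)) * indicator {0<..<s} u)"
      using AE_lborel_singleton[of 0] AE_lborel_singleton[of s]
    proof eventually_elim
      case (elim u)
      show ?case
      proof (cases "0 < u \<and> u < s")
        case True
        have "(\<integral>\<^sup>+l. ?F l u \<partial>lborel) = (\<integral>\<^sup>+l. ennreal (l powr ((\<alpha> - \<beta>) - 1) * exp (- u * l powr \<alpha>)) * indicator {0<..} l \<partial>lborel)"
        proof (intro nn_integral_cong)
          fix l :: real
          show "?F l u = ennreal (l powr ((\<alpha> - \<beta>) - 1) * exp (- u * l powr \<alpha>)) * indicator {0<..} l"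
          proof (cases "l > 0")
            case True
            have "l powr \<alpha> * l powr (- \<beta> - 1) = l powr ((\<alpha> - \<beta>) - 1)"
              using True by (simp add: powr_add[symmetric] algebra_simps)
            then have "l powr \<alpha> * exp (- (l powr \<alpha>) * u) * l powr (- \<beta> - 1) = l powr ((\<alpha> - \<beta>) - 1) * exp (- u * l powr \<alpha>)"
              by (simp add: mult_ac)
            then show ?thesis using \<open>0 < u \<and> u < s\<close> True by (simp add: indicator_def)
          qed simp
        qed
        also have "\<dots> = ennreal (Gamma ((\<alpha> - \<beta>) / \<alpha>) / \<alpha> * u powr (- (\<alpha> - \<beta>) / \<alpha>))"
          using True a ba by (intro Gamma_nn_powr) auto
        also have "\<dots> = ennreal (Gamma (1 - \<beta> / \<alpha>) / \<beta>) * (ennreal (\<beta> / \<alpha> * u powr (\<beta> / \<alpha> - 1)) * indicator {0<..<s} u)"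
        proof -
          have e1: "(\<alpha> - \<beta>) / \<alpha> = 1 - \<beta> / \<alpha>" "- (\<alpha> - \<beta>) / \<alpha> = \<beta> / \<alpha> - 1"
            using a by (auto simp: field_simps)
          have "Gamma (1 - \<beta> / \<alpha>) > 0" using a ba by (intro Gamma_real_pos) (simp add: field_simps)
          then show ?thesis using True a b unfolding e1
            by (simp add: ennreal_mult'[symmetric] indicator_def)
        qed
        finally show ?thesis .
      next
        case False
        with elim have "u < 0 \<or> u > s" by auto
        then show ?thesis by (auto simp: indicator_def)
      qed
    qed
  qed
  also have "\<dots> = ennreal (Gamma (1 - \<beta> / \<alpha>) / \<beta>) * ennreal (s powr (\<beta> / \<alpha>))"
    using a b s powr_integral_0c[of "\<beta>/\<alpha>" s] by (subst nn_integral_cmult) auto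
  also have "\<dots> = ennreal (Gamma (1 - \<beta> / \<alpha>) / \<beta> * s powr (\<beta> / \<alpha>))"
  proof -
    have "Gamma (1 - \<beta> / \<alpha>) > 0" using a ba by (intro Gamma_real_pos) (simp add: field_simps)
    then show ?thesis using b by (simp add: ennreal_mult'[symmetric])
  qed
  finally show ?thesis .
qed

lemma powr_as_integral:
  assumes b: "0 < \<beta>" "\<beta> < 1" and y: "y \<ge> 0"
  shows "ennreal (y powr \<beta>) = ennreal (\<beta> / Gamma (1 - \<beta>)) *
     (\<integral>\<^sup>+l. ennreal ((1 - exp (- y * l)) * l powr (- \<beta> - 1)) * indicator {0<..} l \<partial>lborel)"
proof -
  have "(\<integral>\<^sup>+l. ennreal ((1 - exp (- y * l)) * l powr (- \<beta> - 1)) * indicator {0<..} l \<partial>lborel)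
     = (\<integral>\<^sup>+l. ennreal ((1 - exp (- y * l powr 1)) * l powr (- \<beta> - 1)) * indicator {0<..} l \<partial>lborel)"
    by (intro nn_integral_cong) (auto simp: indicator_def)
  also have "\<dots> = ennreal (Gamma (1 - \<beta> / 1) / \<beta> * y powr (\<beta> / 1))"
    using b y by (intro laplace_powr_integral) auto
  also have "\<dots> = ennreal (Gamma (1 - \<beta>) / \<beta> * y powr \<beta>)" by (simp only: div_by_1)
  finally have eq: "(\<integral>\<^sup>+l. ennreal ((1 - exp (- y * l)) * l powr (- \<beta> - 1)) * indicator {0<..} l \<partial>lborel)
     = ennreal (Gamma (1 - \<beta>) / \<beta> * y powr \<beta>)" .
  have G: "Gamma (1 - \<beta>) > 0" using b by (intro Gamma_real_pos) simp
  have Gne: "Gamma (1 - \<beta>) \<noteq> 0" using G by linarith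
  have "\<beta> / Gamma (1 - \<beta>) * (Gamma (1 - \<beta>) / \<beta> * y powr \<beta>) = y powr \<beta>"
    using Gne b by (simp add: field_simps)
  moreover have "ennreal (\<beta> / Gamma (1 - \<beta>)) * ennreal (Gamma (1 - \<beta>) / \<beta> * y powr \<beta>)
     = ennreal (\<beta> / Gamma (1 - \<beta>) * (Gamma (1 - \<beta>) / \<beta> * y powr \<beta>))"
    using G b by (intro ennreal_mult[symmetric]) auto
  ultimately show ?thesis unfolding eq by simp
qed

lemma stable_sub_facts:
  assumes "stable_subordinator M \<alpha> H"
  shows "prob_space M" "\<And>t. H t \<in> borel_measurable M"
    "\<And>\<omega>. \<omega> \<in> space M \<Longrightarrow> H 0 \<omega> = 0"
    "\<And>\<omega> s t. \<omega> \<in> space M \<Longrightarrow> 0 \<le> s \<Longrightarrow> s \<le> t \<Longrightarrow> H s \<omega> \<le> H t \<omega>"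
    "\<And>\<omega> t. \<omega> \<in> space M \<Longrightarrow> 0 \<le> t \<Longrightarrow> continuous (at_right t) (\<lambda>s. H s \<omega>)"
    "\<And>t l. 0 \<le> t \<Longrightarrow> 0 < l \<Longrightarrow> (\<integral>\<omega>. exp (- l * H t \<omega>) \<partial>M) = exp (- t * l powr \<alpha>)"
proof -
  show "prob_space M" "\<And>t. H t \<in> borel_measurable M"
    "\<And>\<omega>. \<omega> \<in> space M \<Longrightarrow> H 0 \<omega> = 0"
    "\<And>\<omega> t. \<omega> \<in> space M \<Longrightarrow> 0 \<le> t \<Longrightarrow> continuous (at_right t) (\<lambda>s. H s \<omega>)"
    "\<And>t l. 0 \<le> t \<Longrightarrow> 0 < l \<Longrightarrow> (\<integral>\<omega>. exp (- l * H t \<omega>) \<partial>M) = exp (- t * l powr \<alpha>)"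
    using assms unfolding stable_subordinator_def by auto
  fix \<omega> and s t :: real assume "\<omega> \<in> space M" "0 \<le> s" "s \<le> t"
  moreover have "mono_on {0..} (\<lambda>t. H t \<omega>)" using assms \<open>\<omega> \<in> space M\<close> unfolding stable_subordinator_def by auto
  ultimately show "H s \<omega> \<le> H t \<omega>" by (intro mono_onD[of "{0..}" "\<lambda>t. H t \<omega>"]) auto
qed

lemma stable_sub_nonneg:
  assumes "stable_subordinator M \<alpha> H" "\<omega> \<in> space M" "0 \<le> t"
  shows "0 \<le> H t \<omega>"
proof -
  have "H 0 \<omega> \<le> H t \<omega>" using stable_sub_facts(4)[OF assms(1) assms(2) _ assms(3)] by simp
  then show ?thesis using stable_sub_facts(3)[OF assms(1) assms(2)] by simp
qed

lemma subordinator_moment: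
  assumes H: "stable_subordinator M \<alpha> H" and a: "\<alpha> \<le> 1" and b: "0 < \<beta>" "\<beta> < \<alpha>" and s: "s \<ge> 0"
  shows "(\<integral>\<^sup>+\<omega>. ennreal (H s \<omega> powr \<beta>) \<partial>M) = ennreal (Gamma (1 - \<beta> / \<alpha>) / Gamma (1 - \<beta>) * s powr (\<beta> / \<alpha>))"
proof -
  interpret prob_space M using stable_sub_facts(1)[OF H] .
  have Hm[measurable]: "H s \<in> borel_measurable M" using stable_sub_facts(2)[OF H] .
  have b1: "\<beta> < 1" using a b by simp
  have G: "Gamma (1 - \<beta>) > 0" using b1 by (intro Gamma_real_pos) simp
  let ?g = "\<lambda>\<omega> l. ennreal ((1 - exp (- H s \<omega> * l)) * l powr (- \<beta> - 1)) * indicator {0<..} l"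
  have "(\<integral>\<^sup>+\<omega>. ennreal (H s \<omega> powr \<beta>) \<partial>M) = (\<integral>\<^sup>+\<omega>. ennreal (\<beta> / Gamma (1 - \<beta>)) * (\<integral>\<^sup>+l. ?g \<omega> l \<partial>lborel) \<partial>M)"
    using stable_sub_nonneg[OF H _ s] b b1
    by (intro nn_integral_cong) (simp add: powr_as_integral)
  also have "\<dots> = ennreal (\<beta> / Gamma (1 - \<beta>)) * (\<integral>\<^sup>+\<omega>. \<integral>\<^sup>+l. ?g \<omega> l \<partial>lborel \<partial>M)"
    by (rule nn_integral_cmult) measurable
  also have "(\<integral>\<^sup>+\<omega>. \<integral>\<^sup>+l. ?g \<omega> l \<partial>lborel \<partial>M) = (\<integral>\<^sup>+l. \<integral>\<^sup>+\<omega>. ?g \<omega> l \<partial>M \<partial>lborel)"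
  proof -
    interpret pair_sigma_finite M lborel ..
    show ?thesis by (rule Fubini'[symmetric]) measurable
  qed
  also have "\<dots> = (\<integral>\<^sup>+l. ennreal ((1 - exp (- s * l powr \<alpha>)) * l powr (- \<beta> - 1)) * indicator {0<..} l \<partial>lborel)"
  proof (intro nn_integral_cong)
    fix l :: real
    show "(\<integral>\<^sup>+\<omega>. ?g \<omega> l \<partial>M) = ennreal ((1 - exp (- s * l powr \<alpha>)) * l powr (- \<beta> - 1)) * indicator {0<..} l"
    proof (cases "l > 0")
      case True
      have nn: "0 \<le> (1 - exp (- H s \<omega> * l)) * l powr (- \<beta> - 1)" if "\<omega> \<in> space M" for \<omega>
        using stable_sub_nonneg[OF H that s] True by (intro mult_nonneg_nonneg) auto
      have i2: "integrable M (\<lambda>\<omega>. exp (- H s \<omega> * l))"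
      proof (rule integrable_const_bound[where B=1])
        show "AE \<omega> in M. norm (exp (- H s \<omega> * l)) \<le> 1"
          using stable_sub_nonneg[OF H _ s] True by (auto intro!: AE_I2)
        show "(\<lambda>\<omega>. exp (- H s \<omega> * l)) \<in> borel_measurable M" by measurable
      qed
      have int: "integrable M (\<lambda>\<omega>. (1 - exp (- H s \<omega> * l)) * l powr (- \<beta> - 1))"
        using i2 by (intro integrable_mult_left integrable_diff) auto
      have "(\<integral>\<^sup>+\<omega>. ?g \<omega> l \<partial>M) = (\<integral>\<^sup>+\<omega>. ennreal ((1 - exp (- H s \<omega> * l)) * l powr (- \<beta> - 1)) \<partial>M)"
        using True by simp
      also have "\<dots> = ennreal (\<integral>\<omega>. (1 - exp (- H s \<omega> * l)) * l powr (- \<beta> - 1) \<partial>M)"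
        using nn int by (intro nn_integral_eq_integral) (auto intro!: AE_I2)
      also have "(\<integral>\<omega>. (1 - exp (- H s \<omega> * l)) * l powr (- \<beta> - 1) \<partial>M)
          = (1 - (\<integral>\<omega>. exp (- l * H s \<omega>) \<partial>M)) * l powr (- \<beta> - 1)"
      proof -
        show ?thesis using i2 by (simp add: prob_space mult_ac)
      qed
      also have "\<dots> = (1 - exp (- s * l powr \<alpha>)) * l powr (- \<beta> - 1)"
        using stable_sub_facts(6)[OF H s True] by simp
      finally show ?thesis using True by simp
    qed simp
  qed
  also have "\<dots> = ennreal (Gamma (1 - \<beta> / \<alpha>) / \<beta> * s powr (\<beta> / \<alpha>))"
    using b s by (rule laplace_powr_integral)
  also have "ennreal (\<beta> / Gamma (1 - \<beta>)) * \<dots> = ennreal (Gamma (1 - \<beta> / \<alpha>) / Gamma (1 - \<beta>) * s powr (\<beta> / \<alpha>))"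
  proof -
    have "Gamma (1 - \<beta> / \<alpha>) > 0" using b by (intro Gamma_real_pos) (simp add: field_simps)
    then show ?thesis using G b by (simp add: ennreal_mult'[symmetric])
  qed
  finally show ?thesis .
qed

lemma inv_sub_pos:
  assumes H: "stable_subordinator M \<alpha> H" and \<omega>: "\<omega> \<in> space M" and t: "t > 0"
  shows "inverse_subordinator H t \<omega> > 0"
proof -
  have "continuous (at_right 0) (\<lambda>s. H s \<omega>)" using stable_sub_facts(5)[OF H \<omega>] by simp
  then have "((\<lambda>s. H s \<omega>) \<longlongrightarrow> H 0 \<omega>) (at_right 0)"
    by (simp add: continuous_within)
  then have "((\<lambda>s. H s \<omega>) \<longlongrightarrow> 0) (at_right 0)" using stable_sub_facts(3)[OF H \<omega>] by simp
  then have "eventually (\<lambda>s. H s \<omega> < t) (at_right (0::real))"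
    using t by (intro order_tendstoD(2)) auto
  then obtain b :: real where b: "b > 0" "\<And>y. y > 0 \<Longrightarrow> y < b \<Longrightarrow> H y \<omega> < t"
    unfolding eventually_at_right_field by auto
  have "ennreal b \<le> inverse_subordinator H t \<omega>"
    unfolding inverse_subordinator_def
  proof (intro Inf_greatest, clarsimp)
    fix s :: real assume s: "0 \<le> s" "t < H s \<omega>"
    show "b \<le> s"
    proof (rule ccontr)
      assume "\<not> b \<le> s"
      then have "s < b" by simp
      moreover have "s \<noteq> 0" using s stable_sub_facts(3)[OF H \<omega>] t by auto
      ultimately have "H s \<omega> < t" using b s by auto
      with s show False by simp
    qed
  qed
  moreover have "(0::ennreal) < ennreal b" using b(1) by simp
  ultimately show ?thesis by (meson less_le_trans)
qed

lemma lifetime_timechange_bound: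
  assumes H: "stable_subordinator M \<alpha> H" and \<omega>: "\<omega> \<in> space M" and t: "t > 0"
    and cD: "c \<notin> D"
    and cem: "\<And>u. u > 0 \<Longrightarrow> lifetime D X \<omega> \<le> ennreal u \<Longrightarrow> X u \<omega> = c"
    and gt: "lifetime D (time_change c X H) \<omega> > ennreal t"
  shows "\<exists>s\<ge>0. H s \<omega> > t \<and> ennreal s < lifetime D X \<omega>"
proof (rule ccontr)
  assume "\<not> ?thesis"
  then have le: "\<And>s. 0 \<le> s \<Longrightarrow> H s \<omega> > t \<Longrightarrow> lifetime D X \<omega> \<le> ennreal s" by (auto simp: not_less)
  have zL: "lifetime D X \<omega> \<le> inverse_subordinator H t \<omega>"
    unfolding inverse_subordinator_def by (intro Inf_greatest) (auto intro: le)
  have "time_change c X H t \<omega> \<notin> D"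
  proof (cases "inverse_subordinator H t \<omega> = \<top>")
    case True
    then show ?thesis using cD by (simp add: time_change_def)
  next
    case False
    define l where "l = enn2real (inverse_subordinator H t \<omega>)"
    have Ll: "inverse_subordinator H t \<omega> = ennreal l" using False unfolding l_def
      by (cases "inverse_subordinator H t \<omega>") auto
    have "l > 0" using inv_sub_pos[OF H \<omega> t] Ll by simp
    moreover have "lifetime D X \<omega> \<le> ennreal l" using zL Ll by simp
    ultimately have "X l \<omega> = c" by (rule cem)
    then show ?thesis using False cD by (simp add: time_change_def l_def)
  qed
  then have "lifetime D (time_change c X H) \<omega> \<le> ennreal t"
    unfolding lifetime_def using t by (intro Inf_lower) auto
  with gt show False by simp
qed

lemma powr_subadd:
  fixes a b p :: real
  assumes a: "0 \<le> a" and b: "0 \<le> b" and p: "0 < p" "p \<le> 1"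
  shows "(a + b) powr p \<le> a powr p + b powr p"
proof (cases "a + b = 0")
  case True
  then show ?thesis using a b by simp
next
  case False
  then have s: "a + b > 0" using a b by simp
  have ha: "a / (a + b) \<le> (a / (a + b)) powr p"
  proof -
    have "(a / (a + b)) powr 1 \<le> (a / (a + b)) powr p"
      using a b s p by (intro powr_mono') (auto simp: field_simps)
    then show ?thesis using a s by simp
  qed
  have hb: "b / (a + b) \<le> (b / (a + b)) powr p"
  proof -
    have "(b / (a + b)) powr 1 \<le> (b / (a + b)) powr p"
      using a b s p by (intro powr_mono') (auto simp: field_simps)
    then show ?thesis using b s by simp
  qed
  have "1 = a / (a + b) + b / (a + b)" using s by (simp add: add_divide_distrib[symmetric])
  also have "\<dots> \<le> (a / (a + b)) powr p + (b / (a + b)) powr p" using ha hb by simp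
  also have "\<dots> = (a powr p + b powr p) / (a + b) powr p"
    using a b s by (simp add: powr_divide add_divide_distrib)
  finally have "1 \<le> (a powr p + b powr p) / (a + b) powr p" .
  then show ?thesis using s by (simp add: field_simps)
qed

definition gridset :: "('w \<Rightarrow> ennreal) \<Rightarrow> 'w set \<Rightarrow> nat \<Rightarrow> nat \<Rightarrow> 'w set" where
  "gridset Z \<Omega> n j = {\<omega>\<in>\<Omega>. Z \<omega> < ennreal ((real j + 1) / real n)} - {\<omega>\<in>\<Omega>. Z \<omega> < ennreal (real j / real n)}"

lemma gridset_iff:
  "\<omega> \<in> gridset Z \<Omega> n j \<longleftrightarrow> \<omega> \<in> \<Omega> \<and> ennreal (real j / real n) \<le> Z \<omega> \<and> Z \<omega> < ennreal ((real j + 1) / real n)"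
  unfolding gridset_def by auto

lemma gridset_disjoint:
  assumes n: "n > 0"
  shows "disjoint_family (gridset Z \<Omega> n)"
  unfolding disjoint_family_on_def
proof (intro ballI impI equalityI subsetI)
  fix j k \<omega> assume jk: "j \<noteq> k" and \<omega>: "\<omega> \<in> gridset Z \<Omega> n j \<inter> gridset Z \<Omega> n k"
  then have a1: "ennreal (real j / real n) \<le> Z \<omega>" "Z \<omega> < ennreal ((real j + 1) / real n)"
    and a2: "ennreal (real k / real n) \<le> Z \<omega>" "Z \<omega> < ennreal ((real k + 1) / real n)"
    unfolding Int_iff gridset_iff by blast+
  have 1: "ennreal (real j / real n) < ennreal ((real k + 1) / real n)" using a1(1) a2(2) by (rule le_less_trans)
  have 2: "ennreal (real k / real n) < ennreal ((real j + 1) / real n)" using a2(1) a1(2) by (rule le_less_trans)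
  have "real j / n < (real k + 1) / n" using 1 by (subst (asm) ennreal_less_iff) auto
  then have "real j < real k + 1" using n by (simp add: divide_strict_right_mono_neg field_simps)
  moreover have "real k / n < (real j + 1) / n" using 2 by (subst (asm) ennreal_less_iff) auto
  then have "real k < real j + 1" using n by (simp add: field_simps)
  ultimately have "j = k" by linarith
  with jk show "\<omega> \<in> {}" by simp
qed simp

lemma gridset_cover:
  assumes n: "n > 0" and \<omega>: "\<omega> \<in> \<Omega>" and z: "Z \<omega> = ennreal z" "z \<ge> 0"
  shows "\<exists>j. \<omega> \<in> gridset Z \<Omega> n j \<and> z < (real j + 1) / n"
proof -
  define j where "j = nat \<lfloor>z * n\<rfloor>"
  have j1: "real j \<le> z * n" using z n unfolding j_def by (simp add: of_nat_nat)
  have j2: "z * n < real j + 1" using z n unfolding j_def by (simp add: of_nat_nat)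
  have "real j / n \<le> z" using j1 n by (simp add: field_simps)
  moreover have "z < (real j + 1) / n" using j2 n by (simp add: field_simps)
  moreover have "ennreal (real j / n) \<le> Z \<omega>" using z \<open>real j / n \<le> z\<close> by simp
  moreover have "Z \<omega> < ennreal ((real j + 1) / n)" using z \<open>z < (real j + 1) / n\<close> n
    by (simp add: ennreal_lessI)
  ultimately show ?thesis using \<omega> unfolding gridset_iff by blast
qed

lemma gridset_sum_bound:
  assumes n: "n > 0" and p: "0 < p" "p \<le> 1"
  shows "(\<Sum>j. ennreal (((real j + 1) / n) powr p) * indicator (gridset Z \<Omega> n j) \<omega>)
          \<le> epow (Z \<omega>) p + ennreal ((1 / n) powr p)"
proof (cases "\<exists>j. \<omega> \<in> gridset Z \<Omega> n j")
  case True
  then obtain j where j: "\<omega> \<in> gridset Z \<Omega> n j" by auto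
  have "(\<Sum>j. ennreal (((real j + 1) / n) powr p) * indicator (gridset Z \<Omega> n j) \<omega>) = ennreal (((real j + 1) / n) powr p)"
    by (rule suminf_cmult_indicator[OF gridset_disjoint[OF n] j])
  also have "\<dots> \<le> epow (Z \<omega>) p + ennreal ((1 / n) powr p)"
  proof -
    from j have Zlt: "Z \<omega> < ennreal ((real j + 1) / real n)" and Zge: "ennreal (real j / real n) \<le> Z \<omega>" by (auto simp: gridset_iff)
    then have "Z \<omega> \<noteq> \<top>" by auto
    then obtain z where z: "Z \<omega> = ennreal z" "z \<ge> 0" by (cases "Z \<omega>") auto
    have "real j / n \<le> z" using Zge z by simp
    then have "(real j + 1) / n \<le> z + 1 / n" by (simp add: add_divide_distrib)
    then have "((real j + 1) / n) powr p \<le> (z + 1 / n) powr p" using p n by (intro powr_mono2) auto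
    also have "\<dots> \<le> z powr p + (1 / n) powr p" using z p n by (intro powr_subadd) auto
    finally have "ennreal (((real j + 1) / n) powr p) \<le> ennreal (z powr p) + ennreal ((1 / n) powr p)"
      by (simp add: ennreal_plus[symmetric] del: ennreal_plus)
    then show ?thesis using z by (simp add: epow_def)
  qed
  finally show ?thesis .
next
  case False
  then have "(\<Sum>j. ennreal (((real j + 1) / n) powr p) * indicator (gridset Z \<Omega> n j) \<omega>) = 0"
    by simp
  then show ?thesis by simp
qed

abbreviation procalg :: "'w measure \<Rightarrow> (real \<Rightarrow> 'w \<Rightarrow> 'e) \<Rightarrow> 'e measure \<Rightarrow> 'w measure" where
  "procalg Px Y S \<equiv> vimage_algebra (space Px) (\<lambda>\<omega>. \<lambda>t\<in>{0..}. Y t \<omega>) (PiM {0..} (\<lambda>_. S))"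

lemma procalg_event:
  assumes Ym: "\<And>t. t \<ge> 0 \<Longrightarrow> Y t \<in> measurable Px S" and q: "q \<ge> 0" and A: "A \<in> sets S"
  shows "{\<omega>\<in>space Px. Y q \<omega> \<in> A} \<in> sets (procalg Px Y S)"
proof -
  let ?E = "(\<lambda>g. g q) -` A \<inter> space (PiM {0..} (\<lambda>_. S))"
  have "(\<lambda>g. g q) \<in> measurable (PiM {0..} (\<lambda>_. S)) S"
    using q by (intro measurable_component_singleton) auto
  then have E: "?E \<in> sets (PiM {0..} (\<lambda>_. S))" using A by (rule measurable_sets)
  have "(\<lambda>\<omega>. \<lambda>t\<in>{0..}. Y t \<omega>) -` ?E \<inter> space Px = {\<omega>\<in>space Px. Y q \<omega> \<in> A}"
  proof (intro equalityI subsetI)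
    fix \<omega> assume "\<omega> \<in> {\<omega>\<in>space Px. Y q \<omega> \<in> A}"
    then have \<omega>: "\<omega> \<in> space Px" "Y q \<omega> \<in> A" by auto
    have "(\<lambda>t\<in>{0..}. Y t \<omega>) \<in> space (PiM {0..} (\<lambda>_. S))"
      using \<omega>(1) Ym by (auto simp: space_PiM PiE_iff intro: measurable_space)
    then show "\<omega> \<in> (\<lambda>\<omega>. \<lambda>t\<in>{0..}. Y t \<omega>) -` ?E \<inter> space Px" using \<omega> q by auto
  qed (use q in auto)
  then show ?thesis using in_vimage_algebra[OF E, of "\<lambda>\<omega>. \<lambda>t\<in>{0..}. Y t \<omega>" "space Px"] by simp
qed

lemma zeta_lt_event:
  assumes Xm: "\<And>t. t \<ge> 0 \<Longrightarrow> X t \<in> measurable Px S"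
    and cS: "{c} \<in> sets S" and cD: "c \<notin> D"
    and cem: "\<And>\<omega> u. \<omega> \<in> space Px \<Longrightarrow> u > 0 \<Longrightarrow> lifetime D X \<omega> \<le> ennreal u \<Longrightarrow> X u \<omega> = c"
  shows "{\<omega>\<in>space Px. lifetime D X \<omega> < ennreal r} \<in> sets (procalg Px X S)"
proof -
  have eq: "{\<omega>\<in>space Px. lifetime D X \<omega> < ennreal r} = (\<Union>q\<in>\<rat> \<inter> {0<..<r}. {\<omega>\<in>space Px. X q \<omega> \<in> {c}})"
  proof (intro equalityI subsetI)
    fix \<omega> assume "\<omega> \<in> {\<omega>\<in>space Px. lifetime D X \<omega> < ennreal r}"
    then have \<omega>: "\<omega> \<in> space Px" and lt: "lifetime D X \<omega> < ennreal r" by auto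
    then have "lifetime D X \<omega> \<noteq> \<top>" by auto
    then obtain z where z: "lifetime D X \<omega> = ennreal z" "z \<ge> 0" by (cases "lifetime D X \<omega>") auto
    have zr: "z < r" using lt z by (auto simp: ennreal_less_iff)
    obtain q where q: "q \<in> \<rat>" "z < q" "q < r" using Rats_dense_in_real[OF zr] by auto
    have "X q \<omega> = c" using q z \<omega> by (intro cem) auto
    then show "\<omega> \<in> (\<Union>q\<in>\<rat> \<inter> {0<..<r}. {\<omega>\<in>space Px. X q \<omega> \<in> {c}})" using q z \<omega> by auto
  next
    fix \<omega> assume "\<omega> \<in> (\<Union>q\<in>\<rat> \<inter> {0<..<r}. {\<omega>\<in>space Px. X q \<omega> \<in> {c}})"
    then obtain q where q: "q > 0" "q < r" "X q \<omega> = c" and \<omega>: "\<omega> \<in> space Px" by auto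
    have "lifetime D X \<omega> \<le> ennreal q" unfolding lifetime_def using q cD by (intro Inf_lower) auto
    also have "ennreal q < ennreal r" using q by (intro ennreal_lessI) auto
    finally show "\<omega> \<in> {\<omega>\<in>space Px. lifetime D X \<omega> < ennreal r}" using \<omega> by simp
  qed
  show ?thesis unfolding eq
    by (intro sets.countable_UN'' procalg_event[OF Xm] cS) (auto intro: countable_Int1 countable_rat)
qed

lemma epow_measurable[measurable]: "(\<lambda>z. epow z p) \<in> borel_measurable borel"
  unfolding epow_def by measurable

lemma epow_top[simp]: "epow \<top> p = \<top>" by (simp add: epow_def)

lemma part2_main:
  fixes Px :: "'w measure" and X :: "real \<Rightarrow> 'w \<Rightarrow> 'd" and H :: "real \<Rightarrow> 'w \<Rightarrow> real"
  assumes Xm: "\<And>t. t \<ge> 0 \<Longrightarrow> X t \<in> measurable Px S"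
    and cS: "{c} \<in> sets S" and cD: "c \<notin> D"
    and cem: "\<And>\<omega> u. \<omega> \<in> space Px \<Longrightarrow> u > 0 \<Longrightarrow> lifetime D X \<omega> \<le> ennreal u \<Longrightarrow> X u \<omega> = c"
    and H: "stable_subordinator Px \<alpha> H"
    and ind: "independent_processes Px S X borel H"
    and a: "0 < \<alpha>" "\<alpha> \<le> 1" and b: "0 < \<beta>" "\<beta> < \<alpha>"
    and zm: "lifetime D X \<in> borel_measurable Px"
    and fin: "(\<integral>\<^sup>+\<omega>. epow (lifetime D X \<omega>) (\<beta> / \<alpha>) \<partial>Px) < \<top>"
    and t: "t > 0"
  shows "emeasure Px {\<omega>\<in>space Px. lifetime D (time_change c X H) \<omega> > ennreal t}
           \<le> ennreal (Gamma (1 - \<beta> / \<alpha>) / Gamma (1 - \<beta>)) * (\<integral>\<^sup>+\<omega>. epow (lifetime D X \<omega>) (\<beta> / \<alpha>) \<partial>Px) * ennreal (t powr (- \<beta>))"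
proof -
  interpret prob_space Px using stable_sub_facts(1)[OF H] .
  define Z where "Z = lifetime D X"
  define p where "p = \<beta> / \<alpha>"
  define C where "C = Gamma (1 - \<beta> / \<alpha>) / Gamma (1 - \<beta>)"
  define I where "I = (\<integral>\<^sup>+\<omega>. epow (Z \<omega>) p \<partial>Px)"
  define T where "T = t powr (- \<beta>)"
  define LHS where "LHS = emeasure Px {\<omega>\<in>space Px. lifetime D (time_change c X H) \<omega> > ennreal t}"
  have Zm[measurable]: "Z \<in> borel_measurable Px" using zm by (simp add: Z_def)
  have Hm[measurable]: "\<And>s. H s \<in> borel_measurable Px" using stable_sub_facts(2)[OF H] .
  have p: "0 < p" "p \<le> 1" using a b by (auto simp: p_def field_simps)
  have C: "C > 0" unfolding C_def using a b
    by (intro divide_pos_pos Gamma_real_pos) (auto simp: field_simps)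
  have T: "T > 0" unfolding T_def using t by simp
  have Ifin: "I \<noteq> \<top>" using fin by (simp add: I_def Z_def p_def)
  have indep: "indep_set (sets (procalg Px X S)) (sets (procalg Px H borel))"
    using ind unfolding independent_processes_def by simp
  have VXev: "sets (procalg Px X S) \<subseteq> events" and VHev: "sets (procalg Px H borel) \<subseteq> events"
    and mult: "\<And>a b. a \<in> sets (procalg Px X S) \<Longrightarrow> b \<in> sets (procalg Px H borel) \<Longrightarrow> prob (a \<inter> b) = prob a * prob b"
    using indep unfolding indep_sets2_eq by auto
  define A where "A n j = gridset Z (space Px) n j" for n j
  define B where "B n j = {\<omega>\<in>space Px. H ((real j + 1) / real n) \<omega> \<in> {t<..}}" for n j
  have AX: "A n j \<in> sets (procalg Px X S)" for n j
    unfolding A_def gridset_def Z_def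
    by (intro sets.Diff zeta_lt_event[OF Xm cS cD cem]) auto
  have BH: "B n j \<in> sets (procalg Px H borel)" for n j
    unfolding B_def by (intro procalg_event) (auto simp: stable_sub_facts(2)[OF H])
  have Aev: "A n j \<in> events" for n j using AX VXev by auto
  have Bev: "B n j \<in> events" for n j using BH VHev by auto
  define Zinf where "Zinf = {\<omega>\<in>space Px. Z \<omega> = \<top>}"
  have Zinf_ev: "Zinf \<in> events" unfolding Zinf_def by measurable
  have "AE \<omega> in Px. epow (Z \<omega>) p \<noteq> \<infinity>"
    using Ifin unfolding I_def by (intro nn_integral_PInf_AE) auto
  then have "AE \<omega> in Px. Z \<omega> \<noteq> \<top>" by eventually_elim auto
  then have Zinf0: "emeasure Px Zinf = 0"
    by (subst (asm) AE_iff_measurable[OF Zinf_ev]) (auto simp: Zinf_def)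
  have Bbound: "emeasure Px (B n j) \<le> ennreal T * ennreal (C * ((real j + 1) / real n) powr p)" for n j
  proof -
    let ?q = "(real j + 1) / real n"
    have q: "?q \<ge> 0" by simp
    have "emeasure Px (B n j) = (\<integral>\<^sup>+\<omega>. indicator (B n j) \<omega> \<partial>Px)"
      using Bev by simp
    also have "\<dots> \<le> (\<integral>\<^sup>+\<omega>. ennreal T * ennreal (H ?q \<omega> powr \<beta>) \<partial>Px)"
    proof (intro nn_integral_mono)
      fix \<omega> assume \<omega>: "\<omega> \<in> space Px"
      show "indicator (B n j) \<omega> \<le> ennreal T * ennreal (H ?q \<omega> powr \<beta>)"
      proof (cases "\<omega> \<in> B n j")
        case True
        then have Ht: "H ?q \<omega> > t" by (simp add: B_def)
        have "t powr \<beta> \<le> H ?q \<omega> powr \<beta>" using Ht t b by (intro powr_mono2) auto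
        then have "T * t powr \<beta> \<le> T * H ?q \<omega> powr \<beta>" using T by (intro mult_left_mono) auto
        moreover have "T * t powr \<beta> = 1" unfolding T_def using t by (simp add: powr_minus field_simps)
        ultimately have "1 \<le> T * H ?q \<omega> powr \<beta>" by simp
        then have "ennreal 1 \<le> ennreal (T * H ?q \<omega> powr \<beta>)" by (intro ennreal_leI)
        then show ?thesis using True T by (simp add: ennreal_mult)
      qed simp
    qed
    also have "\<dots> = ennreal T * (\<integral>\<^sup>+\<omega>. ennreal (H ?q \<omega> powr \<beta>) \<partial>Px)"
      by (rule nn_integral_cmult) measurable
    also have "(\<integral>\<^sup>+\<omega>. ennreal (H ?q \<omega> powr \<beta>) \<partial>Px) = ennreal (C * ?q powr p)"
      unfolding C_def p_def using subordinator_moment[OF H a(2) b q] .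
    finally show ?thesis .
  qed
  have pern: "LHS \<le> ennreal C * I * ennreal T + ennreal (T * C * (1 / real n) powr p)" if n: "n > 0" for n :: nat
  proof -
    define U where "U = (\<Union>j. A n j \<inter> B n j)"
    have Uev: "U \<in> events" unfolding U_def using Aev Bev by auto
    have sub: "{\<omega>\<in>space Px. lifetime D (time_change c X H) \<omega> > ennreal t} \<subseteq> Zinf \<union> U"
    proof
      fix \<omega> assume "\<omega> \<in> {\<omega>\<in>space Px. lifetime D (time_change c X H) \<omega> > ennreal t}"
      then have \<omega>: "\<omega> \<in> space Px" and gt: "lifetime D (time_change c X H) \<omega> > ennreal t" by auto
      obtain s where s: "s \<ge> 0" "H s \<omega> > t" "ennreal s < Z \<omega>"
        using lifetime_timechange_bound[OF H \<omega> t cD cem[OF \<omega>] gt] unfolding Z_def by auto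
      show "\<omega> \<in> Zinf \<union> U"
      proof (cases "Z \<omega> = \<top>")
        case True then show ?thesis using \<omega> by (simp add: Zinf_def)
      next
        case False
        then obtain z where z: "Z \<omega> = ennreal z" "z \<ge> 0" by (cases "Z \<omega>") auto
        obtain j where j: "\<omega> \<in> gridset Z (space Px) n j" "z < (real j + 1) / n"
          using gridset_cover[of n \<omega> "space Px" Z z] n \<omega> z by auto
        have "s < z" using s(3) z s(1) by (simp add: ennreal_less_iff)
        then have "H s \<omega> \<le> H ((real j + 1) / n) \<omega>"
          using j(2) s(1) by (intro stable_sub_facts(4)[OF H \<omega>]) auto
        then have "\<omega> \<in> B n j" using s(2) \<omega> by (simp add: B_def)
        then show ?thesis using j(1) by (auto simp: U_def A_def)
      qed
    qed
    have "LHS \<le> emeasure Px (Zinf \<union> U)"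
      unfolding LHS_def using sub Zinf_ev Uev by (intro emeasure_mono) auto
    also have "\<dots> \<le> emeasure Px Zinf + emeasure Px U"
      using Zinf_ev Uev by (rule emeasure_subadditive)
    also have "\<dots> = emeasure Px U" using Zinf0 by simp
    also have "\<dots> \<le> (\<Sum>j. emeasure Px (A n j \<inter> B n j))"
      unfolding U_def using Aev Bev by (intro emeasure_subadditive_countably) auto
    also have "\<dots> \<le> (\<Sum>j. ennreal (T * C) * (\<integral>\<^sup>+\<omega>. ennreal (((real j + 1) / n) powr p) * indicator (A n j) \<omega> \<partial>Px))"
    proof (intro suminf_le allI)
      fix j
      have "emeasure Px (A n j \<inter> B n j) = emeasure Px (A n j) * emeasure Px (B n j)"
        using mult[OF AX BH] Aev Bev by (simp add: emeasure_eq_measure ennreal_mult)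
      also have "\<dots> \<le> emeasure Px (A n j) * (ennreal T * ennreal (C * ((real j + 1) / real n) powr p))"
        by (intro mult_left_mono Bbound) auto
      also have "\<dots> = ennreal (T * C) * (ennreal (((real j + 1) / n) powr p) * emeasure Px (A n j))"
        using T C by (simp add: ennreal_mult mult_ac)
      also have "\<dots> = ennreal (T * C) * (\<integral>\<^sup>+\<omega>. ennreal (((real j + 1) / n) powr p) * indicator (A n j) \<omega> \<partial>Px)"
        using Aev by (simp add: nn_integral_cmult_indicator)
      finally show "emeasure Px (A n j \<inter> B n j) \<le> \<dots>" .
    qed auto
    also have "\<dots> = ennreal (T * C) * (\<Sum>j. \<integral>\<^sup>+\<omega>. ennreal (((real j + 1) / n) powr p) * indicator (A n j) \<omega> \<partial>Px)"
      by (rule ennreal_suminf_cmult)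
    also have "(\<Sum>j. \<integral>\<^sup>+\<omega>. ennreal (((real j + 1) / n) powr p) * indicator (A n j) \<omega> \<partial>Px)
        = (\<integral>\<^sup>+\<omega>. (\<Sum>j. ennreal (((real j + 1) / n) powr p) * indicator (A n j) \<omega>) \<partial>Px)"
      using Aev by (intro nn_integral_suminf[symmetric]) auto
    also have "\<dots> \<le> (\<integral>\<^sup>+\<omega>. epow (Z \<omega>) p + ennreal ((1 / real n) powr p) \<partial>Px)"
      unfolding A_def using n p by (intro nn_integral_mono gridset_sum_bound) auto
    also have "\<dots> = I + ennreal ((1 / real n) powr p)"
      unfolding I_def by (subst nn_integral_add) (auto simp: emeasure_space_1)
    finally have "LHS \<le> ennreal (T * C) * (I + ennreal ((1 / real n) powr p))"
      by (simp add: mult_left_mono)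
    also have "\<dots> = ennreal C * I * ennreal T + ennreal (T * C * (1 / real n) powr p)"
      using T C by (simp add: distrib_left ennreal_mult mult_ac)
    finally show ?thesis .
  qed
  have lim: "(\<lambda>n. ennreal C * I * ennreal T + ennreal (T * C * (1 / real n) powr p)) \<longlonglongrightarrow> ennreal C * I * ennreal T + ennreal (T * C * 0)"
  proof (intro tendsto_add tendsto_const tendsto_ennrealI tendsto_mult)
    show "(\<lambda>n. (1 / real n) powr p) \<longlonglongrightarrow> 0"
      using p by (intro tendsto_zero_powrI lim_1_over_n tendsto_const) auto
  qed
  have "LHS \<le> ennreal C * I * ennreal T + ennreal (T * C * 0)"
    by (rule LIMSEQ_le_const[OF lim]) (auto intro!: exI[of _ 1] pern)
  then show ?thesis by (simp add: LHS_def C_def I_def Z_def p_def T_def)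
qed

lemma (in prob_space) integrable_bounded01:
  fixes f :: "'a \<Rightarrow> real"
  assumes "f \<in> borel_measurable M" "\<And>\<omega>. \<omega> \<in> space M \<Longrightarrow> \<bar>f \<omega>\<bar> \<le> B"
  shows "integrable M f"
  using assms by (intro integrable_const_bound[where B=B]) (auto intro!: AE_I2)

lemma (in prob_space) abs_integral_le_const:
  fixes g :: "'a \<Rightarrow> real"
  assumes g[measurable]: "g \<in> borel_measurable M" and bd: "\<And>\<omega>. \<omega> \<in> space M \<Longrightarrow> \<bar>g \<omega>\<bar> \<le> e"
  shows "\<bar>\<integral>\<omega>. g \<omega> \<partial>M\<bar> \<le> e"
proof -
  have ig: "integrable M g" using integrable_bounded01[OF g bd] .
  have "(\<integral>\<omega>. g \<omega> \<partial>M) \<le> (\<integral>\<omega>. e \<partial>M)"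
    using ig bd by (intro integral_mono) (auto simp: abs_le_iff)
  moreover have "(\<integral>\<omega>. - g \<omega> \<partial>M) \<le> (\<integral>\<omega>. e \<partial>M)"
    using ig bd by (intro integral_mono) (auto simp: abs_le_iff)
  ultimately show ?thesis by (simp add: prob_space)
qed

locale two_rv01 = prob_space +
  fixes U V :: "'a \<Rightarrow> real"
  assumes Um[measurable]: "U \<in> borel_measurable M" and Vm[measurable]: "V \<in> borel_measurable M"
    and U01: "\<And>\<omega>. \<omega> \<in> space M \<Longrightarrow> U \<omega> \<in> {0..1}"
    and V01: "\<And>\<omega>. \<omega> \<in> space M \<Longrightarrow> V \<omega> \<in> {0..1}"
    and mom: "\<And>n. (\<integral>\<omega>. U \<omega> ^ n \<partial>M) = (\<integral>\<omega>. V \<omega> ^ n \<partial>M)"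
begin

lemma int_U:
  fixes f :: "real \<Rightarrow> real"
  shows "f \<in> borel_measurable borel \<Longrightarrow> (\<And>x. x \<in> {0..1} \<Longrightarrow> \<bar>f x\<bar> \<le> B) \<Longrightarrow> integrable M (\<lambda>\<omega>. f (U \<omega>))"
  by (rule integrable_bounded01[where B=B]) (auto dest: U01)

lemma int_V:
  fixes f :: "real \<Rightarrow> real"
  shows "f \<in> borel_measurable borel \<Longrightarrow> (\<And>x. x \<in> {0..1} \<Longrightarrow> \<bar>f x\<bar> \<le> B) \<Longrightarrow> integrable M (\<lambda>\<omega>. f (V \<omega>))"
  by (rule integrable_bounded01[where B=B]) (auto dest: V01)

lemma bound_pow: "x \<in> {0..1} \<Longrightarrow> \<bar>(x::real) ^ k * (1 - x) ^ j\<bar> \<le> 1"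
  by (auto simp: abs_mult power_le_one intro!: mult_le_one)

lemma mixed_moments:
  "(\<integral>\<omega>. U \<omega> ^ k * (1 - U \<omega>) ^ j \<partial>M) = (\<integral>\<omega>. V \<omega> ^ k * (1 - V \<omega>) ^ j \<partial>M)"
proof (induction j arbitrary: k)
  case 0
  then show ?case using mom by simp
next
  case (Suc j)
  have eq: "(x::real) ^ k * (1 - x) ^ Suc j = x ^ k * (1 - x) ^ j - x ^ Suc k * (1 - x) ^ j" for x
    by (simp add: algebra_simps)
  have iU: "integrable M (\<lambda>\<omega>. U \<omega> ^ k' * (1 - U \<omega>) ^ j)" for k'
    using int_U[of "\<lambda>x. x ^ k' * (1 - x) ^ j" 1] bound_pow by auto
  have iV: "integrable M (\<lambda>\<omega>. V \<omega> ^ k' * (1 - V \<omega>) ^ j)" for k'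
    using int_V[of "\<lambda>x. x ^ k' * (1 - x) ^ j" 1] bound_pow by auto
  have dU: "(\<integral>\<omega>. U \<omega> ^ k * (1 - U \<omega>) ^ j - U \<omega> ^ Suc k * (1 - U \<omega>) ^ j \<partial>M)
     = (\<integral>\<omega>. U \<omega> ^ k * (1 - U \<omega>) ^ j \<partial>M) - (\<integral>\<omega>. U \<omega> ^ Suc k * (1 - U \<omega>) ^ j \<partial>M)"
    by (rule Bochner_Integration.integral_diff[OF iU iU])
  have dV: "(\<integral>\<omega>. V \<omega> ^ k * (1 - V \<omega>) ^ j - V \<omega> ^ Suc k * (1 - V \<omega>) ^ j \<partial>M)
     = (\<integral>\<omega>. V \<omega> ^ k * (1 - V \<omega>) ^ j \<partial>M) - (\<integral>\<omega>. V \<omega> ^ Suc k * (1 - V \<omega>) ^ j \<partial>M)"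
    by (rule Bochner_Integration.integral_diff[OF iV iV])
  show ?case unfolding eq dU dV using Suc[of k] Suc[of "Suc k"] by simp
qed

lemma bernstein_moments:
  "(\<integral>\<omega>. (\<Sum>k\<le>n. f (k / n) * Bernstein n k (U \<omega>)) \<partial>M) = (\<integral>\<omega>. (\<Sum>k\<le>n. f (k / n) * Bernstein n k (V \<omega>)) \<partial>M)"
proof -
  have bb: "\<bar>f (k / n) * Bernstein n k x\<bar> \<le> \<bar>f (k / n)\<bar> * (n choose k)" if x: "x \<in> {0..1}" for k x
  proof -
    have "Bernstein n k x = (n choose k) * (x ^ k * (1 - x) ^ (n - k))" by (simp add: Bernstein_def mult_ac)
    moreover have "0 \<le> x ^ k * (1 - x) ^ (n - k)" "x ^ k * (1 - x) ^ (n - k) \<le> 1"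
      using x bound_pow[OF x, of k "n - k"] by auto
    ultimately have "\<bar>Bernstein n k x\<bar> \<le> (n choose k)"
      by (auto simp: abs_mult intro!: mult_left_le)
    then show ?thesis by (auto simp: abs_mult intro!: mult_left_mono)
  qed
  have bU: "integrable M (\<lambda>\<omega>. f (k / n) * Bernstein n k (U \<omega>))" for k
    using int_U[of "\<lambda>x. f (k / n) * Bernstein n k x" "\<bar>f (k / n)\<bar> * (n choose k)"] bb
    by (auto simp: Bernstein_def)
  have bV: "integrable M (\<lambda>\<omega>. f (k / n) * Bernstein n k (V \<omega>))" for k
    using int_V[of "\<lambda>x. f (k / n) * Bernstein n k x" "\<bar>f (k / n)\<bar> * (n choose k)"] bb
    by (auto simp: Bernstein_def)
  have "(\<integral>\<omega>. (\<Sum>k\<le>n. f (k / n) * Bernstein n k (U \<omega>)) \<partial>M) = (\<Sum>k\<le>n. \<integral>\<omega>. f (k / n) * Bernstein n k (U \<omega>) \<partial>M)"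
    using bU by (rule Bochner_Integration.integral_sum)
  also have "\<dots> = (\<Sum>k\<le>n. \<integral>\<omega>. f (k / n) * Bernstein n k (V \<omega>) \<partial>M)"
  proof (intro sum.cong refl)
    fix k
    have eU: "(\<lambda>\<omega>. f (k / n) * Bernstein n k (U \<omega>)) = (\<lambda>\<omega>. (f (k / n) * (n choose k)) * (U \<omega> ^ k * (1 - U \<omega>) ^ (n - k)))"
      by (simp add: Bernstein_def fun_eq_iff mult_ac)
    have eV: "(\<lambda>\<omega>. f (k / n) * Bernstein n k (V \<omega>)) = (\<lambda>\<omega>. (f (k / n) * (n choose k)) * (V \<omega> ^ k * (1 - V \<omega>) ^ (n - k)))"
      by (simp add: Bernstein_def fun_eq_iff mult_ac)
    show "(\<integral>\<omega>. f (k / n) * Bernstein n k (U \<omega>) \<partial>M) = (\<integral>\<omega>. f (k / n) * Bernstein n k (V \<omega>) \<partial>M)"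
      unfolding eU eV integral_mult_right_zero mixed_moments ..
  qed
  also have "\<dots> = (\<integral>\<omega>. (\<Sum>k\<le>n. f (k / n) * Bernstein n k (V \<omega>)) \<partial>M)"
    using bV by (rule Bochner_Integration.integral_sum[symmetric])
  finally show ?thesis .
qed

end

context two_rv01
begin

lemma cont_eq:
  fixes f :: "real \<Rightarrow> real"
  assumes contf: "continuous_on {0..1} f" and fm[measurable]: "f \<in> borel_measurable borel"
  shows "(\<integral>\<omega>. f (U \<omega>) \<partial>M) = (\<integral>\<omega>. f (V \<omega>) \<partial>M)"
proof -
  have "bounded (f ` {0..1})"
    by (intro compact_imp_bounded compact_continuous_image contf) auto
  then obtain B where B: "B > 0" "\<And>x. x \<in> {0..1} \<Longrightarrow> \<bar>f x\<bar> \<le> B"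
    unfolding bounded_pos by auto
  have key: "\<bar>(\<integral>\<omega>. f (U \<omega>) \<partial>M) - (\<integral>\<omega>. f (V \<omega>) \<partial>M)\<bar> \<le> 2 * e" if e: "e > 0" for e
  proof -
    obtain N where N: "\<And>n x. N \<le> n \<Longrightarrow> x \<in> {0..1} \<Longrightarrow> \<bar>f x - (\<Sum>k\<le>n. f (k / n) * Bernstein n k x)\<bar> < e"
      using Bernstein_Weierstrass[OF contf e] by blast
    define p where "p x = (\<Sum>k\<le>N. f (k / N) * Bernstein N k x)" for x
    have pm[measurable]: "p \<in> borel_measurable borel" unfolding p_def Bernstein_def by measurable
    have pe: "\<bar>f x - p x\<bar> \<le> e" if "x \<in> {0..1}" for x
      using N[of N x] that unfolding p_def by simp
    have pB: "\<bar>p x\<bar> \<le> B + e" if "x \<in> {0..1}" for x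
      using pe[OF that] B(2)[OF that] by linarith
    have iUf: "integrable M (\<lambda>\<omega>. f (U \<omega>))" using int_U[OF fm B(2)] .
    have iVf: "integrable M (\<lambda>\<omega>. f (V \<omega>))" using int_V[OF fm B(2)] .
    have iUp: "integrable M (\<lambda>\<omega>. p (U \<omega>))" using int_U[OF pm pB] .
    have iVp: "integrable M (\<lambda>\<omega>. p (V \<omega>))" using int_V[OF pm pB] .
    have dU: "\<bar>(\<integral>\<omega>. f (U \<omega>) \<partial>M) - (\<integral>\<omega>. p (U \<omega>) \<partial>M)\<bar> \<le> e"
    proof -
      have "(\<integral>\<omega>. f (U \<omega>) \<partial>M) - (\<integral>\<omega>. p (U \<omega>) \<partial>M) = (\<integral>\<omega>. f (U \<omega>) - p (U \<omega>) \<partial>M)"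
        using iUf iUp by (rule Bochner_Integration.integral_diff[symmetric])
      also have "\<bar>\<dots>\<bar> \<le> e" using pe U01 by (intro abs_integral_le_const) auto
      finally show ?thesis .
    qed
    have dV: "\<bar>(\<integral>\<omega>. f (V \<omega>) \<partial>M) - (\<integral>\<omega>. p (V \<omega>) \<partial>M)\<bar> \<le> e"
    proof -
      have "(\<integral>\<omega>. f (V \<omega>) \<partial>M) - (\<integral>\<omega>. p (V \<omega>) \<partial>M) = (\<integral>\<omega>. f (V \<omega>) - p (V \<omega>) \<partial>M)"
        using iVf iVp by (rule Bochner_Integration.integral_diff[symmetric])
      also have "\<bar>\<dots>\<bar> \<le> e" using pe V01 by (intro abs_integral_le_const) auto
      finally show ?thesis .
    qed
    have "(\<integral>\<omega>. p (U \<omega>) \<partial>M) = (\<integral>\<omega>. p (V \<omega>) \<partial>M)"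
      unfolding p_def by (rule bernstein_moments)
    then show ?thesis using dU dV by linarith
  qed
  show ?thesis
  proof (rule ccontr)
    assume ne: "(\<integral>\<omega>. f (U \<omega>) \<partial>M) \<noteq> (\<integral>\<omega>. f (V \<omega>) \<partial>M)"
    define d where "d = \<bar>(\<integral>\<omega>. f (U \<omega>) \<partial>M) - (\<integral>\<omega>. f (V \<omega>) \<partial>M)\<bar>"
    have "d > 0" using ne by (simp add: d_def)
    then have "d \<le> 2 * (d / 4)" using key[of "d / 4"] by (simp add: d_def)
    with \<open>d > 0\<close> show False by simp
  qed
qed

lemma lim_eq:
  fixes F :: "nat \<Rightarrow> real \<Rightarrow> real" and g :: "real \<Rightarrow> real"
  assumes contF: "\<And>k. continuous_on {0..1} (F k)" and Fm[measurable]: "\<And>k. F k \<in> borel_measurable borel"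
    and Fb: "\<And>k x. x \<in> {0..1} \<Longrightarrow> \<bar>F k x\<bar> \<le> 1"
    and lim: "\<And>x. x \<in> {0..1} \<Longrightarrow> (\<lambda>k. F k x) \<longlonglongrightarrow> g x"
    and gm[measurable]: "g \<in> borel_measurable borel"
  shows "(\<integral>\<omega>. g (U \<omega>) \<partial>M) = (\<integral>\<omega>. g (V \<omega>) \<partial>M)"
proof -
  have lU: "(\<lambda>k. \<integral>\<omega>. F k (U \<omega>) \<partial>M) \<longlonglongrightarrow> (\<integral>\<omega>. g (U \<omega>) \<partial>M)"
    by (rule integral_dominated_convergence[where w="\<lambda>_. 1"])
       (use U01 Fb lim in \<open>auto intro!: AE_I2\<close>)
  have lV: "(\<lambda>k. \<integral>\<omega>. F k (V \<omega>) \<partial>M) \<longlonglongrightarrow> (\<integral>\<omega>. g (V \<omega>) \<partial>M)"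
    by (rule integral_dominated_convergence[where w="\<lambda>_. 1"])
       (use V01 Fb lim in \<open>auto intro!: AE_I2\<close>)
  have "(\<lambda>k. \<integral>\<omega>. F k (U \<omega>) \<partial>M) = (\<lambda>k. \<integral>\<omega>. F k (V \<omega>) \<partial>M)"
    using cont_eq[OF contF Fm] by simp
  with lU lV show ?thesis using LIMSEQ_unique by metis
qed

end

lemma laplace_unique_cdf:
  fixes Y W :: "'a \<Rightarrow> real"
  assumes P: "prob_space M" and Ym[measurable]: "Y \<in> borel_measurable M" and Wm[measurable]: "W \<in> borel_measurable M"
    and Y0: "\<And>\<omega>. \<omega> \<in> space M \<Longrightarrow> Y \<omega> \<ge> 0" and W0: "\<And>\<omega>. \<omega> \<in> space M \<Longrightarrow> W \<omega> \<ge> 0"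
    and lap: "\<And>l. l > 0 \<Longrightarrow> (\<integral>\<omega>. exp (- l * Y \<omega>) \<partial>M) = (\<integral>\<omega>. exp (- l * W \<omega>) \<partial>M)"
  shows "measure M {\<omega>\<in>space M. Y \<omega> \<le> a} = measure M {\<omega>\<in>space M. W \<omega> \<le> a}"
    and "measure M {\<omega>\<in>space M. Y \<omega> < a} = measure M {\<omega>\<in>space M. W \<omega> < a}"
proof -
  interpret prob_space M by (rule P)
  interpret two_rv01 M "\<lambda>\<omega>. exp (- Y \<omega>)" "\<lambda>\<omega>. exp (- W \<omega>)"
  proof
    have em: "(\<lambda>x::real. exp (- x)) \<in> borel_measurable borel"
      by (intro borel_measurable_continuous_onI continuous_intros)
    show "(\<lambda>\<omega>. exp (- Y \<omega>)) \<in> borel_measurable M" using measurable_compose[OF Ym em] by (simp add: comp_def)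
    show "(\<lambda>\<omega>. exp (- W \<omega>)) \<in> borel_measurable M" using measurable_compose[OF Wm em] by (simp add: comp_def)
    show "exp (- Y \<omega>) \<in> {0..1}" if "\<omega> \<in> space M" for \<omega> using Y0[OF that] by auto
    show "exp (- W \<omega>) \<in> {0..1}" if "\<omega> \<in> space M" for \<omega> using W0[OF that] by auto
    fix n :: nat
    show "(\<integral>\<omega>. exp (- Y \<omega>) ^ n \<partial>M) = (\<integral>\<omega>. exp (- W \<omega>) ^ n \<partial>M)"
    proof (cases "n = 0")
      case True then show ?thesis by simp
    next
      case False
      have "(\<lambda>\<omega>. exp (- Y \<omega>) ^ n) = (\<lambda>\<omega>. exp (- real n * Y \<omega>))"
        by (rule ext) (metis exp_of_nat_mult mult_minus_left mult_minus_right)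
      moreover have "(\<lambda>\<omega>. exp (- W \<omega>) ^ n) = (\<lambda>\<omega>. exp (- real n * W \<omega>))"
        by (rule ext) (metis exp_of_nat_mult mult_minus_left mult_minus_right)
      moreover have "real n > 0" using False by simp
      ultimately show ?thesis using lap[of "real n"] by (simp only:)
    qed
  qed
  define c where "c = exp (- a)"
  have Yle: "Y \<omega> \<le> a \<longleftrightarrow> exp (- Y \<omega>) \<ge> c" for \<omega> by (simp add: c_def)
  have Wle: "W \<omega> \<le> a \<longleftrightarrow> exp (- W \<omega>) \<ge> c" for \<omega> by (simp add: c_def)
  have Ylt: "Y \<omega> < a \<longleftrightarrow> exp (- Y \<omega>) > c" for \<omega> by (simp add: c_def)
  have Wlt: "W \<omega> < a \<longleftrightarrow> exp (- W \<omega>) > c" for \<omega> by (simp add: c_def)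
  have mY: "measure M {\<omega>\<in>space M. Z \<omega>} = (\<integral>\<omega>. (indicator {\<omega>\<in>space M. Z \<omega>} \<omega> :: real) \<partial>M)" for Z
  proof -
    have "{\<omega>\<in>space M. Z \<omega>} \<inter> space M = {\<omega>\<in>space M. Z \<omega>}" by auto
    then show ?thesis by simp
  qed
  define F where "F k x = max 0 (min 1 (1 + real k * (x - c)))" for k x
  have "(\<integral>\<omega>. (indicator {c..} (exp (- Y \<omega>)) :: real) \<partial>M) = (\<integral>\<omega>. (indicator {c..} (exp (- W \<omega>)) :: real) \<partial>M)"
  proof (rule lim_eq[where F=F and g="indicator {c..}"])
    fix x :: real
    show "(\<lambda>k. F k x) \<longlonglongrightarrow> indicator {c..} x"
    proof (cases "x \<ge> c")
      case True
      then have "F k x = 1" for k unfolding F_def by (auto simp: max_def min_def)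
      then show ?thesis using True by simp
    next
      case False
      obtain N :: nat where N: "1 / (c - x) < N" using reals_Archimedean2 by blast
      have "F k x = 0" if "k \<ge> N" for k
      proof -
        have "real N \<le> real k" using that by simp
        then have "1 / (c - x) < real k" using N by linarith
        then have "1 < real k * (c - x)" using False by (simp add: pos_divide_less_eq)
        then show ?thesis unfolding F_def by (simp add: algebra_simps)
      qed
      then have "eventually (\<lambda>k. F k x = indicator {c..} x) sequentially"
        using False unfolding eventually_sequentially by auto
      then show ?thesis by (rule tendsto_eventually)
    qed
  next
    show "continuous_on {0..1} (F k)" for k unfolding F_def by (intro continuous_intros)
    show "F k \<in> borel_measurable borel" for k unfolding F_def
      by (intro borel_measurable_continuous_onI continuous_intros)
    show "\<bar>F k x\<bar> \<le> 1" for k x unfolding F_def by (simp add: max_def min_def)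
    show "indicator {c..} \<in> borel_measurable (borel :: real measure)"
      by (intro borel_measurable_indicator) auto
  qed
  then show "measure M {\<omega>\<in>space M. Y \<omega> \<le> a} = measure M {\<omega>\<in>space M. W \<omega> \<le> a}"
  proof -
    assume eq: "(\<integral>\<omega>. (indicator {c..} (exp (- Y \<omega>)) :: real) \<partial>M) = (\<integral>\<omega>. (indicator {c..} (exp (- W \<omega>)) :: real) \<partial>M)"
    have "measure M {\<omega>\<in>space M. Y \<omega> \<le> a} = (\<integral>\<omega>. (indicator {\<omega>\<in>space M. Y \<omega> \<le> a} \<omega> :: real) \<partial>M)"
      by (rule mY)
    also have "\<dots> = (\<integral>\<omega>. (indicator {c..} (exp (- Y \<omega>)) :: real) \<partial>M)"
      by (intro Bochner_Integration.integral_cong refl) (auto simp: indicator_def Yle)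
    also note eq
    also have "(\<integral>\<omega>. (indicator {c..} (exp (- W \<omega>)) :: real) \<partial>M) = (\<integral>\<omega>. (indicator {\<omega>\<in>space M. W \<omega> \<le> a} \<omega> :: real) \<partial>M)"
      by (intro Bochner_Integration.integral_cong refl) (auto simp: indicator_def Wle)
    also have "\<dots> = measure M {\<omega>\<in>space M. W \<omega> \<le> a}" by (rule mY[symmetric])
    finally show ?thesis .
  qed
  define G where "G k x = max 0 (min 1 (real k * (x - c)))" for k x
  have "(\<integral>\<omega>. (indicator {c<..} (exp (- Y \<omega>)) :: real) \<partial>M) = (\<integral>\<omega>. (indicator {c<..} (exp (- W \<omega>)) :: real) \<partial>M)"
  proof (rule lim_eq[where F=G and g="indicator {c<..}"])
    fix x :: real
    show "(\<lambda>k. G k x) \<longlonglongrightarrow> indicator {c<..} x"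
    proof (cases "x > c")
      case False
      have "real k * (x - c) \<le> 0" for k using False by (intro mult_nonneg_nonpos) auto
      then have "G k x = 0" for k unfolding G_def
        by (metis max.absorb1 min.absorb2 min.bounded_iff zero_less_one_class.zero_le_one)
      then show ?thesis using False by simp
    next
      case True
      obtain N :: nat where N: "1 / (x - c) < N" using reals_Archimedean2 by blast
      have "G k x = 1" if "k \<ge> N" for k
      proof -
        have "real N \<le> real k" using that by simp
        then have "1 / (x - c) < real k" using N by linarith
        then have "1 < real k * (x - c)" using True by (simp add: pos_divide_less_eq)
        then show ?thesis unfolding G_def by (simp add: algebra_simps)
      qed
      then have "eventually (\<lambda>k. G k x = indicator {c<..} x) sequentially"
        using True unfolding eventually_sequentially by auto
      then show ?thesis by (rule tendsto_eventually)
    qed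
  next
    show "continuous_on {0..1} (G k)" for k unfolding G_def by (intro continuous_intros)
    show "G k \<in> borel_measurable borel" for k unfolding G_def
      by (intro borel_measurable_continuous_onI continuous_intros)
    show "\<bar>G k x\<bar> \<le> 1" for k x unfolding G_def by (simp add: max_def min_def)
    show "indicator {c<..} \<in> borel_measurable (borel :: real measure)"
      by (intro borel_measurable_indicator) auto
  qed
  then show "measure M {\<omega>\<in>space M. Y \<omega> < a} = measure M {\<omega>\<in>space M. W \<omega> < a}"
  proof -
    assume eq: "(\<integral>\<omega>. (indicator {c<..} (exp (- Y \<omega>)) :: real) \<partial>M) = (\<integral>\<omega>. (indicator {c<..} (exp (- W \<omega>)) :: real) \<partial>M)"
    have "measure M {\<omega>\<in>space M. Y \<omega> < a} = (\<integral>\<omega>. (indicator {\<omega>\<in>space M. Y \<omega> < a} \<omega> :: real) \<partial>M)"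
      by (rule mY)
    also have "\<dots> = (\<integral>\<omega>. (indicator {c<..} (exp (- Y \<omega>)) :: real) \<partial>M)"
      by (intro Bochner_Integration.integral_cong refl) (auto simp: indicator_def Ylt)
    also note eq
    also have "(\<integral>\<omega>. (indicator {c<..} (exp (- W \<omega>)) :: real) \<partial>M) = (\<integral>\<omega>. (indicator {\<omega>\<in>space M. W \<omega> < a} \<omega> :: real) \<partial>M)"
      by (intro Bochner_Integration.integral_cong refl) (auto simp: indicator_def Wlt)
    also have "\<dots> = measure M {\<omega>\<in>space M. W \<omega> < a}" by (rule mY[symmetric])
    finally show ?thesis .
  qed
qed

lemma inv_sub_rat:
  assumes H: "stable_subordinator M \<alpha> H" and \<omega>: "\<omega> \<in> space M"
  shows "inverse_subordinator H t \<omega> = (INF q\<in>\<rat> \<inter> {0..}. if H q \<omega> > t then ennreal q else \<top>)"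
    (is "?L = ?R")
proof (rule antisym)
  show "?L \<le> ?R"
    unfolding inverse_subordinator_def
    by (intro INF_greatest) (auto intro!: Inf_lower)
  show "?R \<le> ?L"
    unfolding inverse_subordinator_def
  proof (intro Inf_greatest, clarify)
    fix s assume s: "0 \<le> s" "t < H s \<omega>"
    have "continuous (at_right s) (\<lambda>y. H y \<omega>)" using stable_sub_facts(5)[OF H \<omega> s(1)] .
    then have "((\<lambda>y. H y \<omega>) \<longlongrightarrow> H s \<omega>) (at_right s)" by (simp add: continuous_within)
    then have "eventually (\<lambda>y. H y \<omega> > t) (at_right s)" using s(2) by (rule order_tendstoD(1))
    then obtain b where b: "b > s" "\<And>y. y > s \<Longrightarrow> y < b \<Longrightarrow> H y \<omega> > t"
      unfolding eventually_at_right_field by auto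
    show "?R \<le> ennreal s"
    proof (rule ccontr)
      assume "\<not> ?R \<le> ennreal s"
      then have "ennreal s < ?R" by simp
      then obtain z where z: "ennreal s < z" "z < ?R" using dense by blast
      then have "z \<noteq> \<top>" by auto
      then obtain y where y: "z = ennreal y" "y \<ge> 0" by (cases z) auto
      have "s < y" using z(1) y s(1) by (simp add: ennreal_less_iff)
      then have "s < min y b" using b by simp
      then obtain q where q: "q \<in> \<rat>" "s < q" "q < min y b" using Rats_dense_in_real by blast
      have "?R \<le> (if H q \<omega> > t then ennreal q else \<top>)"
        using q s by (intro INF_lower) auto
      also have "\<dots> = ennreal q" using b q by auto
      also have "\<dots> \<le> z" using q y by simp
      finally show False using z(2) by simp
    qed
  qed
qed

lemma inv_sub_measurable:
  assumes H: "stable_subordinator M \<alpha> H"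
  shows "inverse_subordinator H t \<in> borel_measurable M"
proof -
  have Hm[measurable]: "\<And>s. H s \<in> borel_measurable M" using stable_sub_facts(2)[OF H] .
  have "(\<lambda>\<omega>. INF q\<in>\<rat> \<inter> {0..}. if H q \<omega> > t then ennreal q else \<top>) \<in> borel_measurable M"
  proof (rule borel_measurable_INF)
    show "countable (\<rat> \<inter> {0..})" by (auto intro: countable_Int1 countable_rat)
    fix q :: real
    have S: "{\<omega>\<in>space M. t < H q \<omega>} \<in> sets M" by measurable
    show "(\<lambda>\<omega>. if H q \<omega> > t then ennreal q else \<top>) \<in> borel_measurable M"
      by (rule measurable_If[where P="\<lambda>\<omega>. t < H q \<omega>" and f="\<lambda>_. ennreal q" and g="\<lambda>_. \<top>"]) (auto intro: S)
  qed
  then show ?thesis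
    by (rule measurable_cong[THEN iffD1, rotated]) (simp add: inv_sub_rat[OF H])
qed

lemma inv_sub_sandwich:
  assumes H: "stable_subordinator M \<alpha> H" and \<omega>: "\<omega> \<in> space M" and s: "s > 0"
  shows "H s \<omega> < t \<Longrightarrow> ennreal s < inverse_subordinator H t \<omega>"
    and "ennreal s < inverse_subordinator H t \<omega> \<Longrightarrow> H s \<omega> \<le> t"
proof -
  assume Hs: "H s \<omega> < t"
  have "continuous (at_right s) (\<lambda>y. H y \<omega>)" using stable_sub_facts(5)[OF H \<omega>] s by simp
  then have "((\<lambda>y. H y \<omega>) \<longlongrightarrow> H s \<omega>) (at_right s)" by (simp add: continuous_within)
  then have "eventually (\<lambda>y. H y \<omega> < t) (at_right s)" using Hs by (rule order_tendstoD(2))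
  then obtain b where b: "b > s" "\<And>y. y > s \<Longrightarrow> y < b \<Longrightarrow> H y \<omega> < t"
    unfolding eventually_at_right_field by auto
  have "ennreal b \<le> inverse_subordinator H t \<omega>"
    unfolding inverse_subordinator_def
  proof (intro Inf_greatest, clarsimp)
    fix y :: real assume y: "0 \<le> y" "t < H y \<omega>"
    show "b \<le> y"
    proof (rule ccontr)
      assume "\<not> b \<le> y"
      then have yb: "y < b" by simp
      show False
      proof (cases "y \<le> s")
        case True
        then have "H y \<omega> \<le> H s \<omega>" using stable_sub_facts(4)[OF H \<omega> y(1)] by simp
        then show False using Hs y by simp
      next
        case False
        then show False using b(2)[of y] yb y by auto
      qed
    qed
  qed
  moreover have "ennreal s < ennreal b" using b s by (intro ennreal_lessI) auto
  ultimately show "ennreal s < inverse_subordinator H t \<omega>" by (rule less_le_trans[rotated])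
next
  assume lt: "ennreal s < inverse_subordinator H t \<omega>"
  show "H s \<omega> \<le> t"
  proof (rule ccontr)
    assume "\<not> H s \<omega> \<le> t"
    then have "inverse_subordinator H t \<omega> \<le> ennreal s"
      unfolding inverse_subordinator_def using s by (intro Inf_lower) auto
    with lt show False by simp
  qed
qed

lemma powr_integral_top:
  assumes b: "\<beta> > 0"
  shows "(\<integral>\<^sup>+s. ennreal (\<beta> * s powr (\<beta> - 1)) * indicator {0<..} s \<partial>lborel) = \<top>"
proof (rule ccontr)
  let ?I = "(\<integral>\<^sup>+s. ennreal (\<beta> * s powr (\<beta> - 1)) * indicator {0<..} s \<partial>lborel)"
  assume "?I \<noteq> \<top>"
  then obtain r where r: "?I = ennreal r" "r \<ge> 0" by (cases ?I) auto
  define m where "m = (r + 1) powr (1 / \<beta>)"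
  have m0: "m \<ge> 0" by (simp add: m_def)
  have "ennreal (m powr \<beta>) = (\<integral>\<^sup>+s. ennreal (\<beta> * s powr (\<beta> - 1)) * indicator {0<..<m} s \<partial>lborel)"
    using powr_integral_0c[OF b m0] by simp
  also have "\<dots> \<le> ?I"
    by (intro nn_integral_mono mult_left_mono) (auto simp: indicator_def)
  finally have "ennreal (m powr \<beta>) \<le> ennreal r" using r by simp
  moreover have "m powr \<beta> = r + 1" using b r by (simp add: m_def powr_powr)
  ultimately show False using r by simp
qed

lemma layer_cake_point:
  assumes b: "\<beta> > 0"
  shows "epow z \<beta> = (\<integral>\<^sup>+s. ennreal (\<beta> * s powr (\<beta> - 1)) * indicator {0<..} s * (if ennreal s < z then 1 else 0) \<partial>lborel)"
proof (cases z)
  case (real l)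
  then have l: "z = ennreal l" "l \<ge> 0" by auto
  have "(\<integral>\<^sup>+s. ennreal (\<beta> * s powr (\<beta> - 1)) * indicator {0<..} s * (if ennreal s < z then 1 else 0) \<partial>lborel)
      = (\<integral>\<^sup>+s. ennreal (\<beta> * s powr (\<beta> - 1)) * indicator {0<..<l} s \<partial>lborel)"
  proof (intro nn_integral_cong)
    fix s :: real
    show "ennreal (\<beta> * s powr (\<beta> - 1)) * indicator {0<..} s * (if ennreal s < z then 1 else 0) =
          ennreal (\<beta> * s powr (\<beta> - 1)) * indicator {0<..<l} s"
      using l by (cases "s > 0") (auto simp: indicator_def ennreal_less_iff)
  qed
  also have "\<dots> = ennreal (l powr \<beta>)" using powr_integral_0c[OF b l(2)] .
  finally show ?thesis using l by (simp add: epow_def)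
next
  case top
  have "(\<integral>\<^sup>+s. ennreal (\<beta> * s powr (\<beta> - 1)) * indicator {0<..} s * (if ennreal s < z then 1 else 0) \<partial>lborel)
      = (\<integral>\<^sup>+s. ennreal (\<beta> * s powr (\<beta> - 1)) * indicator {0<..} s \<partial>lborel)"
    using top by (intro nn_integral_cong) simp
  also have "\<dots> = \<top>" using powr_integral_top[OF b] .
  finally show ?thesis using top by simp
qed

lemma moment_tonelli:
  fixes L :: "'a \<Rightarrow> ennreal"
  assumes P: "prob_space M" and Lm[measurable]: "L \<in> borel_measurable M" and b: "\<beta> > 0"
  shows "(\<integral>\<^sup>+\<omega>. epow (L \<omega>) \<beta> \<partial>M)
       = (\<integral>\<^sup>+s. ennreal (\<beta> * s powr (\<beta> - 1)) * indicator {0<..} s * emeasure M {\<omega>\<in>space M. ennreal s < L \<omega>} \<partial>lborel)"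
proof -
  interpret prob_space M by (rule P)
  interpret pair_sigma_finite M lborel ..
  let ?F = "\<lambda>\<omega> s. ennreal (\<beta> * s powr (\<beta> - 1)) * indicator {0<..} s * (if ennreal s < L \<omega> then 1 else 0)"
  have "(\<integral>\<^sup>+\<omega>. epow (L \<omega>) \<beta> \<partial>M) = (\<integral>\<^sup>+\<omega>. \<integral>\<^sup>+s. ?F \<omega> s \<partial>lborel \<partial>M)"
    using b by (intro nn_integral_cong) (rule layer_cake_point)
  also have "\<dots> = (\<integral>\<^sup>+s. \<integral>\<^sup>+\<omega>. ?F \<omega> s \<partial>M \<partial>lborel)"
    by (rule Fubini'[symmetric]) measurable
  also have "\<dots> = (\<integral>\<^sup>+s. ennreal (\<beta> * s powr (\<beta> - 1)) * indicator {0<..} s * emeasure M {\<omega>\<in>space M. ennreal s < L \<omega>} \<partial>lborel)"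
  proof (intro nn_integral_cong)
    fix s :: real
    have S: "{\<omega>\<in>space M. ennreal s < L \<omega>} \<in> sets M" by measurable
    have "(\<integral>\<^sup>+\<omega>. ?F \<omega> s \<partial>M) = (\<integral>\<^sup>+\<omega>. (ennreal (\<beta> * s powr (\<beta> - 1)) * indicator {0<..} s) * indicator {\<omega>\<in>space M. ennreal s < L \<omega>} \<omega> \<partial>M)"
      by (intro nn_integral_cong) (auto simp: indicator_def)
    also have "\<dots> = ennreal (\<beta> * s powr (\<beta> - 1)) * indicator {0<..} s * emeasure M {\<omega>\<in>space M. ennreal s < L \<omega>}"
      using S by (rule nn_integral_cmult_indicator)
    finally show "(\<integral>\<^sup>+\<omega>. ?F \<omega> s \<partial>M) = \<dots>" .
  qed
  finally show ?thesis .
qed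

lemma sub_scaling:
  assumes H: "stable_subordinator M \<alpha> H" and a: "\<alpha> > 0" and s: "s > 0"
  shows "emeasure M {\<omega>\<in>space M. H s \<omega> \<le> t} = emeasure M {\<omega>\<in>space M. s powr (1 / \<alpha>) * H 1 \<omega> \<le> t}"
    and "emeasure M {\<omega>\<in>space M. H s \<omega> < t} = emeasure M {\<omega>\<in>space M. s powr (1 / \<alpha>) * H 1 \<omega> < t}"
proof -
  interpret prob_space M using stable_sub_facts(1)[OF H] .
  have Hm[measurable]: "\<And>s. H s \<in> borel_measurable M" using stable_sub_facts(2)[OF H] .
  have lap: "(\<integral>\<omega>. exp (- l * H s \<omega>) \<partial>M) = (\<integral>\<omega>. exp (- l * (s powr (1 / \<alpha>) * H 1 \<omega>)) \<partial>M)" if l: "l > 0" for l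
  proof -
    have "(\<integral>\<omega>. exp (- l * (s powr (1 / \<alpha>) * H 1 \<omega>)) \<partial>M) = (\<integral>\<omega>. exp (- (l * s powr (1 / \<alpha>)) * H 1 \<omega>) \<partial>M)"
      by (simp add: mult_ac)
    also have "\<dots> = exp (- 1 * (l * s powr (1 / \<alpha>)) powr \<alpha>)"
      using l s by (intro stable_sub_facts(6)[OF H]) auto
    also have "(l * s powr (1 / \<alpha>)) powr \<alpha> = s * l powr \<alpha>"
      using l s a by (simp add: powr_mult powr_powr)
    finally show ?thesis using stable_sub_facts(6)[OF H, of s l] s l by simp
  qed
  have Y0: "\<And>\<omega>. \<omega> \<in> space M \<Longrightarrow> H s \<omega> \<ge> 0" using stable_sub_nonneg[OF H] s by simp
  have W0: "\<And>\<omega>. \<omega> \<in> space M \<Longrightarrow> s powr (1 / \<alpha>) * H 1 \<omega> \<ge> 0" using stable_sub_nonneg[OF H] by simp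
  note U = laplace_unique_cdf[OF prob_space_axioms Hm _ Y0 W0 lap]
  have Wm: "(\<lambda>\<omega>. s powr (1 / \<alpha>) * H 1 \<omega>) \<in> borel_measurable M" by measurable
  have S1: "{\<omega>\<in>space M. H s \<omega> \<le> t} \<in> sets M" "{\<omega>\<in>space M. s powr (1 / \<alpha>) * H 1 \<omega> \<le> t} \<in> sets M"
    "{\<omega>\<in>space M. H s \<omega> < t} \<in> sets M" "{\<omega>\<in>space M. s powr (1 / \<alpha>) * H 1 \<omega> < t} \<in> sets M"
    by measurable
  show "emeasure M {\<omega>\<in>space M. H s \<omega> \<le> t} = emeasure M {\<omega>\<in>space M. s powr (1 / \<alpha>) * H 1 \<omega> \<le> t}"
    using U(1)[OF Wm, of t] S1 by (simp add: emeasure_eq_measure)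
  show "emeasure M {\<omega>\<in>space M. H s \<omega> < t} = emeasure M {\<omega>\<in>space M. s powr (1 / \<alpha>) * H 1 \<omega> < t}"
    using U(2)[OF Wm, of t] S1 by (simp add: emeasure_eq_measure)
qed

lemma sub_pos_AE:
  assumes H: "stable_subordinator M \<alpha> H" and a: "\<alpha> > 0"
  shows "AE \<omega> in M. H 1 \<omega> > 0"
proof -
  interpret prob_space M using stable_sub_facts(1)[OF H] .
  have Hm[measurable]: "\<And>s. H s \<in> borel_measurable M" using stable_sub_facts(2)[OF H] .
  have S: "{\<omega>\<in>space M. H 1 \<omega> \<le> 0} \<in> sets M" by measurable
  have bound: "measure M {\<omega>\<in>space M. H 1 \<omega> \<le> 0} \<le> exp (- (l powr \<alpha>))" if l: "l > 0" for l
  proof -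
    have ie: "integrable M (\<lambda>\<omega>. exp (- l * H 1 \<omega>))"
      by (rule integrable_bounded01[where B=1]) (use stable_sub_nonneg[OF H] l in auto)
    have "measure M {\<omega>\<in>space M. H 1 \<omega> \<le> 0} = (\<integral>\<omega>. indicator {\<omega>\<in>space M. H 1 \<omega> \<le> 0} \<omega> \<partial>M)"
      using S by simp
    also have "\<dots> \<le> (\<integral>\<omega>. exp (- l * H 1 \<omega>) \<partial>M)"
    proof (rule integral_mono)
      show "integrable M (indicat_real {\<omega> \<in> space M. H 1 \<omega> \<le> 0})"
        by (rule integrable_bounded01[where B=1]) (auto intro: borel_measurable_indicator[OF S] simp: indicator_def)
      show "integrable M (\<lambda>\<omega>. exp (- l * H 1 \<omega>))" by (rule ie)
      fix \<omega> assume \<omega>: "\<omega> \<in> space M"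
      show "indicator {\<omega>\<in>space M. H 1 \<omega> \<le> 0} \<omega> \<le> exp (- l * H 1 \<omega>)"
        using stable_sub_nonneg[OF H \<omega>, of 1] \<omega> by (auto simp: indicator_def)
    qed
    also have "\<dots> = exp (- 1 * l powr \<alpha>)" using l by (intro stable_sub_facts(6)[OF H]) auto
    finally show ?thesis by simp
  qed
  have "measure M {\<omega>\<in>space M. H 1 \<omega> \<le> 0} \<le> 0"
  proof (rule field_le_epsilon)
    fix e :: real assume e: "e > 0"
    show "measure M {\<omega>\<in>space M. H 1 \<omega> \<le> 0} \<le> 0 + e"
    proof (cases "e < 1")
      case True
      define l where "l = (- ln e) powr (1 / \<alpha>)"
      have lnpos: "- ln e > 0" using True e by simp
      have "l > 0" using lnpos by (simp add: l_def)
      moreover have "l powr \<alpha> = - ln e" using lnpos a by (simp add: l_def powr_powr)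
      ultimately show ?thesis using bound[of l] e by simp
    next
      case False
      then show ?thesis using prob_le_1 by (smt (verit))
    qed
  qed
  then have "emeasure M {\<omega>\<in>space M. H 1 \<omega> \<le> 0} = 0"
    using S by (simp add: emeasure_eq_measure measure_nonneg antisym)
  then have "AE \<omega> in M. \<not> H 1 \<omega> \<le> 0"
    using S by (subst AE_iff_measurable[OF S]) auto
  then show ?thesis by (simp add: not_le)
qed

lemma pow_equiv:
  fixes s w t a :: real
  assumes s: "s > 0" and w: "w > 0" and t: "t > 0" and a: "a > 0"
  shows "s powr (1 / a) * w < t \<longleftrightarrow> s < (t / w) powr a"
    and "s powr (1 / a) * w \<le> t \<longleftrightarrow> s \<le> (t / w) powr a"
proof -
  have e1: "s powr (1 / a) * w < t \<longleftrightarrow> s powr (1 / a) < t / w" using w by (simp add: field_simps)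
  have e2: "s powr (1 / a) * w \<le> t \<longleftrightarrow> s powr (1 / a) \<le> t / w" using w by (simp add: field_simps)
  have tw: "t / w > 0" using t w by simp
  have bk: "((t / w) powr a) powr (1 / a) = t / w" using a t w by (simp add: powr_powr)
  have fwd: "(s powr (1 / a)) powr a = s" using a s by (simp add: powr_powr)
  show "s powr (1 / a) * w < t \<longleftrightarrow> s < (t / w) powr a"
  proof
    assume "s powr (1 / a) * w < t"
    then have "s powr (1 / a) < t / w" using e1 by simp
    then have "(s powr (1 / a)) powr a < (t / w) powr a" using a by (intro powr_less_mono2) auto
    then show "s < (t / w) powr a" using fwd by simp
  next
    assume "s < (t / w) powr a"
    then have "s powr (1 / a) < ((t / w) powr a) powr (1 / a)" using a s by (intro powr_less_mono2) auto
    then show "s powr (1 / a) * w < t" using bk e1 by simp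
  qed
  show "s powr (1 / a) * w \<le> t \<longleftrightarrow> s \<le> (t / w) powr a"
  proof
    assume "s powr (1 / a) * w \<le> t"
    then have "s powr (1 / a) \<le> t / w" using e2 by simp
    then have "(s powr (1 / a)) powr a \<le> (t / w) powr a" using a s by (intro powr_mono2) auto
    then show "s \<le> (t / w) powr a" using fwd by simp
  next
    assume "s \<le> (t / w) powr a"
    then have "s powr (1 / a) \<le> ((t / w) powr a) powr (1 / a)" using a s by (intro powr_mono2) auto
    then show "s powr (1 / a) * w \<le> t" using bk e2 by simp
  qed
qed

lemma J_formula:
  fixes W :: "'a \<Rightarrow> real"
  assumes P: "prob_space M" and Wm[measurable]: "W \<in> borel_measurable M"
    and Wpos: "AE \<omega> in M. W \<omega> > 0" and a: "\<alpha> > 0" and b: "\<beta> > 0" and t: "t > 0"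
  shows "(\<integral>\<^sup>+s. ennreal (\<beta> * s powr (\<beta> - 1)) * indicator {0<..} s * emeasure M {\<omega>\<in>space M. s powr (1 / \<alpha>) * W \<omega> < t} \<partial>lborel)
        = (\<integral>\<^sup>+\<omega>. ennreal (t powr (\<alpha> * \<beta>) * W \<omega> powr (- (\<alpha> * \<beta>))) \<partial>M)"
    and "(\<integral>\<^sup>+s. ennreal (\<beta> * s powr (\<beta> - 1)) * indicator {0<..} s * emeasure M {\<omega>\<in>space M. s powr (1 / \<alpha>) * W \<omega> \<le> t} \<partial>lborel)
        = (\<integral>\<^sup>+\<omega>. ennreal (t powr (\<alpha> * \<beta>) * W \<omega> powr (- (\<alpha> * \<beta>))) \<partial>M)"
proof -
  interpret prob_space M by (rule P)
  interpret pair_sigma_finite lborel M ..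
  let ?c = "\<lambda>s. ennreal (\<beta> * s powr (\<beta> - 1)) * indicator {0<..} s"
  have inner: "(\<integral>\<^sup>+s. ?c s * (if R s then 1 else 0) \<partial>lborel) = ennreal (t powr (\<alpha> * \<beta>) * w powr (- (\<alpha> * \<beta>)))"
    if w: "w > 0" and R: "\<And>s. s > 0 \<Longrightarrow> s \<noteq> (t / w) powr \<alpha> \<Longrightarrow> R s \<longleftrightarrow> s < (t / w) powr \<alpha>" for w R
  proof -
    have "(\<integral>\<^sup>+s. ?c s * (if R s then 1 else 0) \<partial>lborel) = (\<integral>\<^sup>+s. ennreal (\<beta> * s powr (\<beta> - 1)) * indicator {0<..<(t / w) powr \<alpha>} s \<partial>lborel)"
    proof (intro nn_integral_cong_AE)
      show "AE s in lborel. ?c s * (if R s then 1 else 0) = ennreal (\<beta> * s powr (\<beta> - 1)) * indicator {0<..<(t / w) powr \<alpha>} s"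
        using AE_lborel_singleton[of "(t / w) powr \<alpha>"]
      proof eventually_elim
        case (elim s)
        then show ?case using R[of s] by (cases "s > 0") (auto simp: indicator_def)
      qed
    qed
    also have "\<dots> = ennreal (((t / w) powr \<alpha>) powr \<beta>)"
      by (rule powr_integral_0c[OF b]) simp
    also have "((t / w) powr \<alpha>) powr \<beta> = t powr (\<alpha> * \<beta>) * w powr (- (\<alpha> * \<beta>))"
    proof -
      have "((t / w) powr \<alpha>) powr \<beta> = (t / w) powr (\<alpha> * \<beta>)" by (simp add: powr_powr)
      also have "\<dots> = t powr (\<alpha> * \<beta>) / w powr (\<alpha> * \<beta>)" using t w by (simp add: powr_divide)
      also have "\<dots> = t powr (\<alpha> * \<beta>) * w powr (- (\<alpha> * \<beta>))" by (simp add: powr_minus divide_inverse)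
      finally show ?thesis .
    qed
    finally show ?thesis .
  qed
  have gen: "(\<integral>\<^sup>+s. ?c s * emeasure M {\<omega>\<in>space M. R s (W \<omega>)} \<partial>lborel)
        = (\<integral>\<^sup>+\<omega>. ennreal (t powr (\<alpha> * \<beta>) * W \<omega> powr (- (\<alpha> * \<beta>))) \<partial>M)"
    if Rm: "{x \<in> space (lborel \<Otimes>\<^sub>M M). R (fst x) (W (snd x))} \<in> sets (lborel \<Otimes>\<^sub>M M)"
      and R: "\<And>s w. w > 0 \<Longrightarrow> s > 0 \<Longrightarrow> s \<noteq> (t / w) powr \<alpha> \<Longrightarrow> R s w \<longleftrightarrow> s < (t / w) powr \<alpha>" for R
  proof -
    have Sm: "\<And>s. {\<omega>\<in>space M. R s (W \<omega>)} \<in> sets M"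
    proof -
      fix s :: real
      have "Pair s -` {x \<in> space (lborel \<Otimes>\<^sub>M M). R (fst x) (W (snd x))} \<in> sets M"
        by (rule sets_Pair1[OF Rm])
      moreover have "Pair s -` {x \<in> space (lborel \<Otimes>\<^sub>M M). R (fst x) (W (snd x))} = {\<omega>\<in>space M. R s (W \<omega>)}"
        by (auto simp: space_pair_measure)
      ultimately show "{\<omega>\<in>space M. R s (W \<omega>)} \<in> sets M" by simp
    qed
    have "(\<integral>\<^sup>+s. ?c s * emeasure M {\<omega>\<in>space M. R s (W \<omega>)} \<partial>lborel)
        = (\<integral>\<^sup>+s. \<integral>\<^sup>+\<omega>. ?c s * (if R s (W \<omega>) then 1 else 0) \<partial>M \<partial>lborel)"
    proof (intro nn_integral_cong)
      fix s
      have "(\<integral>\<^sup>+\<omega>. ?c s * (if R s (W \<omega>) then 1 else 0) \<partial>M) = (\<integral>\<^sup>+\<omega>. ?c s * indicator {\<omega>\<in>space M. R s (W \<omega>)} \<omega> \<partial>M)"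
        by (intro nn_integral_cong) (auto simp: indicator_def)
      also have "\<dots> = ?c s * emeasure M {\<omega>\<in>space M. R s (W \<omega>)}"
        by (rule nn_integral_cmult_indicator[OF Sm])
      finally show "?c s * emeasure M {\<omega>\<in>space M. R s (W \<omega>)} = (\<integral>\<^sup>+\<omega>. ?c s * (if R s (W \<omega>) then 1 else 0) \<partial>M)" ..
    qed
    also have "\<dots> = (\<integral>\<^sup>+\<omega>. \<integral>\<^sup>+s. ?c s * (if R s (W \<omega>) then 1 else 0) \<partial>lborel \<partial>M)"
    proof (rule Fubini'[symmetric])
      have mI: "(\<lambda>x. if R (fst x) (W (snd x)) then 1 else (0::ennreal)) \<in> borel_measurable (lborel \<Otimes>\<^sub>M M)"
        by (rule measurable_If[OF measurable_const measurable_const Rm]) auto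
      have mC: "(\<lambda>x. ?c (fst x)) \<in> borel_measurable (lborel \<Otimes>\<^sub>M M)"
        by measurable
      have "(\<lambda>x. ?c (fst x) * (if R (fst x) (W (snd x)) then 1 else (0::ennreal))) \<in> borel_measurable (lborel \<Otimes>\<^sub>M M)"
        by (rule borel_measurable_times_ennreal[OF mC mI])
      then show "(\<lambda>(s, \<omega>). ?c s * (if R s (W \<omega>) then 1 else 0)) \<in> borel_measurable (lborel \<Otimes>\<^sub>M M)"
        by (simp add: case_prod_unfold)
    qed
    also have "\<dots> = (\<integral>\<^sup>+\<omega>. ennreal (t powr (\<alpha> * \<beta>) * W \<omega> powr (- (\<alpha> * \<beta>))) \<partial>M)"
    proof (intro nn_integral_cong_AE)
      show "AE \<omega> in M. (\<integral>\<^sup>+s. ?c s * (if R s (W \<omega>) then 1 else 0) \<partial>lborel) = ennreal (t powr (\<alpha> * \<beta>) * W \<omega> powr (- (\<alpha> * \<beta>)))"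
        using Wpos
      proof eventually_elim
        case (elim \<omega>)
        show ?case by (rule inner[OF elim]) (rule R[OF elim])
      qed
    qed
    finally show ?thesis .
  qed
  show "(\<integral>\<^sup>+s. ennreal (\<beta> * s powr (\<beta> - 1)) * indicator {0<..} s * emeasure M {\<omega>\<in>space M. s powr (1 / \<alpha>) * W \<omega> < t} \<partial>lborel)
        = (\<integral>\<^sup>+\<omega>. ennreal (t powr (\<alpha> * \<beta>) * W \<omega> powr (- (\<alpha> * \<beta>))) \<partial>M)"
  proof (rule gen)
    show "{x \<in> space (lborel \<Otimes>\<^sub>M M). fst x powr (1 / \<alpha>) * W (snd x) < t} \<in> sets (lborel \<Otimes>\<^sub>M M)" by measurable
  qed (use pow_equiv(1)[OF _ _ t a] in auto)
  show "(\<integral>\<^sup>+s. ennreal (\<beta> * s powr (\<beta> - 1)) * indicator {0<..} s * emeasure M {\<omega>\<in>space M. s powr (1 / \<alpha>) * W \<omega> \<le> t} \<partial>lborel)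
        = (\<integral>\<^sup>+\<omega>. ennreal (t powr (\<alpha> * \<beta>) * W \<omega> powr (- (\<alpha> * \<beta>))) \<partial>M)"
  proof (rule gen)
    show "{x \<in> space (lborel \<Otimes>\<^sub>M M). fst x powr (1 / \<alpha>) * W (snd x) \<le> t} \<in> sets (lborel \<Otimes>\<^sub>M M)" by measurable
  qed (use pow_equiv(2)[OF _ _ t a] in \<open>auto simp: le_less\<close>)
qed

lemma neg_moment:
  assumes H: "stable_subordinator M \<alpha> H" and a: "\<alpha> > 0" and g: "\<gamma> > 0"
  shows "(\<integral>\<^sup>+\<omega>. ennreal (H 1 \<omega> powr (- \<gamma>)) \<partial>M) = ennreal (Gamma (\<gamma> / \<alpha>) / (\<alpha> * Gamma \<gamma>))"
proof -
  interpret prob_space M using stable_sub_facts(1)[OF H] .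
  interpret pair_sigma_finite M lborel ..
  have Hm[measurable]: "\<And>s. H s \<in> borel_measurable M" using stable_sub_facts(2)[OF H] .
  have G: "Gamma \<gamma> > 0" using g by (rule Gamma_real_pos)
  let ?f = "\<lambda>\<omega> l. ennreal (l powr (\<gamma> - 1) * exp (- H 1 \<omega> * l)) * indicator {0<..} l"
  have "(\<integral>\<^sup>+\<omega>. ennreal (H 1 \<omega> powr (- \<gamma>)) \<partial>M) = (\<integral>\<^sup>+\<omega>. ennreal (1 / Gamma \<gamma>) * (\<integral>\<^sup>+l. ?f \<omega> l \<partial>lborel) \<partial>M)"
  proof (intro nn_integral_cong_AE)
    show "AE \<omega> in M. ennreal (H 1 \<omega> powr (- \<gamma>)) = ennreal (1 / Gamma \<gamma>) * (\<integral>\<^sup>+l. ?f \<omega> l \<partial>lborel)"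
      using sub_pos_AE[OF H a]
    proof eventually_elim
      case (elim \<omega>)
      have "(\<integral>\<^sup>+l. ?f \<omega> l \<partial>lborel) = ennreal (Gamma \<gamma> * H 1 \<omega> powr (- \<gamma>))"
        using Gamma_nn_scaled[OF g elim] by simp
      then show ?case using G by (simp add: ennreal_mult[symmetric])
    qed
  qed
  also have "\<dots> = ennreal (1 / Gamma \<gamma>) * (\<integral>\<^sup>+\<omega>. \<integral>\<^sup>+l. ?f \<omega> l \<partial>lborel \<partial>M)"
    by (rule nn_integral_cmult) measurable
  also have "(\<integral>\<^sup>+\<omega>. \<integral>\<^sup>+l. ?f \<omega> l \<partial>lborel \<partial>M) = (\<integral>\<^sup>+l. \<integral>\<^sup>+\<omega>. ?f \<omega> l \<partial>M \<partial>lborel)"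
    by (rule Fubini'[symmetric]) measurable
  also have "\<dots> = (\<integral>\<^sup>+l. ennreal (l powr (\<gamma> - 1) * exp (- 1 * l powr \<alpha>)) * indicator {0<..} l \<partial>lborel)"
  proof (intro nn_integral_cong)
    fix l :: real
    show "(\<integral>\<^sup>+\<omega>. ?f \<omega> l \<partial>M) = ennreal (l powr (\<gamma> - 1) * exp (- 1 * l powr \<alpha>)) * indicator {0<..} l"
    proof (cases "l > 0")
      case True
      have ie: "integrable M (\<lambda>\<omega>. l powr (\<gamma> - 1) * exp (- H 1 \<omega> * l))"
        by (rule integrable_bounded01[where B="l powr (\<gamma> - 1)"])
           (use stable_sub_nonneg[OF H] True in \<open>auto simp: abs_mult intro!: mult_left_le\<close>)
      have "(\<integral>\<^sup>+\<omega>. ?f \<omega> l \<partial>M) = (\<integral>\<^sup>+\<omega>. ennreal (l powr (\<gamma> - 1) * exp (- H 1 \<omega> * l)) \<partial>M)"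
        using True by simp
      also have "\<dots> = ennreal (\<integral>\<omega>. l powr (\<gamma> - 1) * exp (- H 1 \<omega> * l) \<partial>M)"
        using ie by (intro nn_integral_eq_integral) auto
      also have "(\<integral>\<omega>. l powr (\<gamma> - 1) * exp (- H 1 \<omega> * l) \<partial>M) = l powr (\<gamma> - 1) * (\<integral>\<omega>. exp (- l * H 1 \<omega>) \<partial>M)"
        by (simp add: mult_ac)
      also have "(\<integral>\<omega>. exp (- l * H 1 \<omega>) \<partial>M) = exp (- 1 * l powr \<alpha>)"
        using True by (intro stable_sub_facts(6)[OF H]) auto
      finally show ?thesis using True by simp
    qed simp
  qed
  also have "\<dots> = ennreal (Gamma (\<gamma> / \<alpha>) / \<alpha> * 1 powr (- \<gamma> / \<alpha>))"
    by (rule Gamma_nn_powr[OF g _ a]) simp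
  finally have fin: "(\<integral>\<^sup>+\<omega>. ennreal (H 1 \<omega> powr (- \<gamma>)) \<partial>M) = ennreal (1 / Gamma \<gamma>) * ennreal (Gamma (\<gamma> / \<alpha>) / \<alpha> * 1 powr (- \<gamma> / \<alpha>))" .
  have G2: "Gamma (\<gamma> / \<alpha>) > 0" using g a by (intro Gamma_real_pos) simp
  have "ennreal (1 / Gamma \<gamma>) * ennreal (Gamma (\<gamma> / \<alpha>) / \<alpha> * 1 powr (- \<gamma> / \<alpha>))
      = ennreal (1 / Gamma \<gamma> * (Gamma (\<gamma> / \<alpha>) / \<alpha> * 1 powr (- \<gamma> / \<alpha>)))"
    using G G2 a by (intro ennreal_mult[symmetric]) auto
  also have "1 / Gamma \<gamma> * (Gamma (\<gamma> / \<alpha>) / \<alpha> * 1 powr (- \<gamma> / \<alpha>)) = Gamma (\<gamma> / \<alpha>) / (\<alpha> * Gamma \<gamma>)"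
    by simp
  finally show ?thesis using fin by simp
qed

lemma part1_main:
  assumes H: "stable_subordinator M \<alpha> H" and a: "\<alpha> > 0" and b: "\<beta> > 0" and t: "t > 0"
  shows "(\<integral>\<^sup>+\<omega>. epow (inverse_subordinator H t \<omega>) \<beta> \<partial>M)
       = ennreal (Gamma (\<beta> + 1) / Gamma (\<beta> * \<alpha> + 1) * t powr (\<alpha> * \<beta>))"
proof -
  interpret prob_space M using stable_sub_facts(1)[OF H] .
  have Hm[measurable]: "\<And>s. H s \<in> borel_measurable M" using stable_sub_facts(2)[OF H] .
  have Lm[measurable]: "inverse_subordinator H t \<in> borel_measurable M" by (rule inv_sub_measurable[OF H])
  let ?c = "\<lambda>s. ennreal (\<beta> * s powr (\<beta> - 1)) * indicator {0<..} s"
  define V where "V = (\<integral>\<^sup>+\<omega>. ennreal (t powr (\<alpha> * \<beta>) * H 1 \<omega> powr (- (\<alpha> * \<beta>))) \<partial>M)"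
  have E: "(\<integral>\<^sup>+\<omega>. epow (inverse_subordinator H t \<omega>) \<beta> \<partial>M)
      = (\<integral>\<^sup>+s. ?c s * emeasure M {\<omega>\<in>space M. ennreal s < inverse_subordinator H t \<omega>} \<partial>lborel)"
    by (rule moment_tonelli[OF prob_space_axioms Lm b])
  have up: "(\<integral>\<^sup>+s. ?c s * emeasure M {\<omega>\<in>space M. ennreal s < inverse_subordinator H t \<omega>} \<partial>lborel) \<le> V"
  proof -
    have "(\<integral>\<^sup>+s. ?c s * emeasure M {\<omega>\<in>space M. ennreal s < inverse_subordinator H t \<omega>} \<partial>lborel)
        \<le> (\<integral>\<^sup>+s. ?c s * emeasure M {\<omega>\<in>space M. s powr (1 / \<alpha>) * H 1 \<omega> \<le> t} \<partial>lborel)"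
    proof (intro nn_integral_mono)
      fix s :: real
      show "?c s * emeasure M {\<omega>\<in>space M. ennreal s < inverse_subordinator H t \<omega>}
          \<le> ?c s * emeasure M {\<omega>\<in>space M. s powr (1 / \<alpha>) * H 1 \<omega> \<le> t}"
      proof (cases "s > 0")
        case True
        have "emeasure M {\<omega>\<in>space M. ennreal s < inverse_subordinator H t \<omega>} \<le> emeasure M {\<omega>\<in>space M. H s \<omega> \<le> t}"
          using inv_sub_sandwich(2)[OF H _ True] by (intro emeasure_mono) auto
        also have "\<dots> = emeasure M {\<omega>\<in>space M. s powr (1 / \<alpha>) * H 1 \<omega> \<le> t}"
          by (rule sub_scaling(1)[OF H a True])
        finally show ?thesis by (rule mult_left_mono) simp
      qed simp
    qed
    also have "\<dots> = V" unfolding V_def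
      by (rule J_formula(2)[OF prob_space_axioms Hm sub_pos_AE[OF H a] a b t])
    finally show ?thesis .
  qed
  have low: "V \<le> (\<integral>\<^sup>+s. ?c s * emeasure M {\<omega>\<in>space M. ennreal s < inverse_subordinator H t \<omega>} \<partial>lborel)"
  proof -
    have "V = (\<integral>\<^sup>+s. ?c s * emeasure M {\<omega>\<in>space M. s powr (1 / \<alpha>) * H 1 \<omega> < t} \<partial>lborel)"
      unfolding V_def
      by (rule J_formula(1)[OF prob_space_axioms Hm sub_pos_AE[OF H a] a b t, symmetric])
    also have "\<dots> \<le> (\<integral>\<^sup>+s. ?c s * emeasure M {\<omega>\<in>space M. ennreal s < inverse_subordinator H t \<omega>} \<partial>lborel)"
    proof (intro nn_integral_mono)
      fix s :: real
      show "?c s * emeasure M {\<omega>\<in>space M. s powr (1 / \<alpha>) * H 1 \<omega> < t}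
          \<le> ?c s * emeasure M {\<omega>\<in>space M. ennreal s < inverse_subordinator H t \<omega>}"
      proof (cases "s > 0")
        case True
        have "emeasure M {\<omega>\<in>space M. s powr (1 / \<alpha>) * H 1 \<omega> < t} = emeasure M {\<omega>\<in>space M. H s \<omega> < t}"
          by (rule sub_scaling(2)[OF H a True, symmetric])
        also have "\<dots> \<le> emeasure M {\<omega>\<in>space M. ennreal s < inverse_subordinator H t \<omega>}"
          using inv_sub_sandwich(1)[OF H _ True] by (intro emeasure_mono) auto
        finally show ?thesis by (rule mult_left_mono) simp
      qed simp
    qed
    finally show ?thesis .
  qed
  have Vval: "V = ennreal (t powr (\<alpha> * \<beta>)) * ennreal (Gamma (\<alpha> * \<beta> / \<alpha>) / (\<alpha> * Gamma (\<alpha> * \<beta>)))"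
  proof -
    have "V = (\<integral>\<^sup>+\<omega>. ennreal (t powr (\<alpha> * \<beta>)) * ennreal (H 1 \<omega> powr (- (\<alpha> * \<beta>))) \<partial>M)"
      unfolding V_def by (intro nn_integral_cong) (simp add: ennreal_mult)
    also have "\<dots> = ennreal (t powr (\<alpha> * \<beta>)) * (\<integral>\<^sup>+\<omega>. ennreal (H 1 \<omega> powr (- (\<alpha> * \<beta>))) \<partial>M)"
      by (rule nn_integral_cmult) measurable
    also have "(\<integral>\<^sup>+\<omega>. ennreal (H 1 \<omega> powr (- (\<alpha> * \<beta>))) \<partial>M) = ennreal (Gamma (\<alpha> * \<beta> / \<alpha>) / (\<alpha> * Gamma (\<alpha> * \<beta>)))"
      using a b by (intro neg_moment[OF H a]) simp
    finally show ?thesis .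
  qed
  have "(\<integral>\<^sup>+\<omega>. epow (inverse_subordinator H t \<omega>) \<beta> \<partial>M) = V"
    unfolding E using up low by (rule antisym)
  also have "\<dots> = ennreal (Gamma (\<beta> + 1) / Gamma (\<beta> * \<alpha> + 1) * t powr (\<alpha> * \<beta>))"
  proof -
    have ab: "\<alpha> * \<beta> / \<alpha> = \<beta>" using a by simp
    have G1: "Gamma (\<beta> + 1) = \<beta> * Gamma \<beta>" using b by (intro Gamma_plus1) (auto dest: nonpos_Ints_nonpos)
    have G2: "Gamma (\<beta> * \<alpha> + 1) = (\<beta> * \<alpha>) * Gamma (\<beta> * \<alpha>)" using a b
      by (intro Gamma_plus1) (auto dest!: nonpos_Ints_nonpos simp: mult_le_0_iff)
    have Gp: "Gamma (\<beta> * \<alpha>) > 0" using a b by (intro Gamma_real_pos) simp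
    have "Gamma (\<beta> + 1) / Gamma (\<beta> * \<alpha> + 1) = Gamma \<beta> / (\<alpha> * Gamma (\<alpha> * \<beta>))"
      unfolding G1 G2 using a b Gp by (simp add: field_simps mult.commute)
    moreover have "Gamma \<beta> > 0" using b by (rule Gamma_real_pos)
    ultimately show ?thesis unfolding Vval ab using a Gp
      by (simp add: ennreal_mult[symmetric] mult.commute)
  qed
  finally show ?thesis .
qed

theorem mainTheorem2:
  fixes \<alpha> :: real
    and M :: "'a measure" and H\<^sub>1 :: "real \<Rightarrow> 'a \<Rightarrow> real" and \<beta>\<^sub>1 :: real
    and P :: "'d \<Rightarrow> 'w measure" and S :: "'d measure" and X :: "real \<Rightarrow> 'w \<Rightarrow> 'd"
    and D :: "'d set" and c :: 'd and H :: "real \<Rightarrow> 'w \<Rightarrow> real" and x :: 'd and \<beta> :: real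
  assumes "0 < \<alpha>" and "\<alpha> < 1"
  shows
    "(stable_subordinator M \<alpha> H\<^sub>1 \<and> 0 < \<beta>\<^sub>1 \<and> \<beta>\<^sub>1 < 1 / \<alpha> \<longrightarrow>
        (\<forall>t>0. (\<integral>\<^sup>+\<omega>. epow (inverse_subordinator H\<^sub>1 t \<omega>) \<beta>\<^sub>1 \<partial>M)
          = ennreal (Gamma (\<beta>\<^sub>1 + 1) / Gamma (\<beta>\<^sub>1 * \<alpha> + 1) * t powr (\<alpha> * \<beta>\<^sub>1))))
   \<and>
     (markov_process P S X \<and> D \<in> sets S \<and> c \<notin> D \<and> space S = insert c D \<and>
        (\<forall>y\<in>space S. \<forall>\<omega>\<in>space (P y). \<forall>t>0. lifetime D X \<omega> \<le> ennreal t \<longrightarrow> X t \<omega> = c) \<and>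
        (\<forall>y\<in>space S. stable_subordinator (P y) \<alpha> H) \<and>
        (\<forall>y\<in>space S. independent_processes (P y) S X borel H) \<and>
        x \<in> D \<and> 0 < \<beta> \<and> \<beta> < \<alpha> \<and>
        lifetime D X \<in> borel_measurable (P x) \<and>
        (\<integral>\<^sup>+\<omega>. epow (lifetime D X \<omega>) (\<beta> / \<alpha>) \<partial>(P x)) < \<top>
        \<longrightarrow>
        (\<forall>t>0. emeasure (P x) {\<omega>\<in>space (P x). lifetime D (time_change c X H) \<omega> > ennreal t}
           \<le> ennreal (Gamma (1 - \<beta> / \<alpha>) / Gamma (1 - \<beta>))
              * (\<integral>\<^sup>+\<omega>. epow (lifetime D X \<omega>) (\<beta> / \<alpha>) \<partial>(P x))
              * ennreal (t powr (- \<beta>))))"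
  proof (rule conjI)
  show "stable_subordinator M \<alpha> H\<^sub>1 \<and> 0 < \<beta>\<^sub>1 \<and> \<beta>\<^sub>1 < 1 / \<alpha> \<longrightarrow>
        (\<forall>t>0. (\<integral>\<^sup>+\<omega>. epow (inverse_subordinator H\<^sub>1 t \<omega>) \<beta>\<^sub>1 \<partial>M)
          = ennreal (Gamma (\<beta>\<^sub>1 + 1) / Gamma (\<beta>\<^sub>1 * \<alpha> + 1) * t powr (\<alpha> * \<beta>\<^sub>1)))"
  proof (intro impI allI)
    fix t :: real
    assume h: "stable_subordinator M \<alpha> H\<^sub>1 \<and> 0 < \<beta>\<^sub>1 \<and> \<beta>\<^sub>1 < 1 / \<alpha>" and t: "t > 0"
    show "(\<integral>\<^sup>+\<omega>. epow (inverse_subordinator H\<^sub>1 t \<omega>) \<beta>\<^sub>1 \<partial>M)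
          = ennreal (Gamma (\<beta>\<^sub>1 + 1) / Gamma (\<beta>\<^sub>1 * \<alpha> + 1) * t powr (\<alpha> * \<beta>\<^sub>1))"
      using h t assms(1) by (intro part1_main) auto
  qed
next
  show "markov_process P S X \<and> D \<in> sets S \<and> c \<notin> D \<and> space S = insert c D \<and>
        (\<forall>y\<in>space S. \<forall>\<omega>\<in>space (P y). \<forall>t>0. lifetime D X \<omega> \<le> ennreal t \<longrightarrow> X t \<omega> = c) \<and>
        (\<forall>y\<in>space S. stable_subordinator (P y) \<alpha> H) \<and>
        (\<forall>y\<in>space S. independent_processes (P y) S X borel H) \<and>
        x \<in> D \<and> 0 < \<beta> \<and> \<beta> < \<alpha> \<and>
        lifetime D X \<in> borel_measurable (P x) \<and>
        (\<integral>\<^sup>+\<omega>. epow (lifetime D X \<omega>) (\<beta> / \<alpha>) \<partial>(P x)) < \<top>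
        \<longrightarrow>
        (\<forall>t>0. emeasure (P x) {\<omega>\<in>space (P x). lifetime D (time_change c X H) \<omega> > ennreal t}
           \<le> ennreal (Gamma (1 - \<beta> / \<alpha>) / Gamma (1 - \<beta>))
              * (\<integral>\<^sup>+\<omega>. epow (lifetime D X \<omega>) (\<beta> / \<alpha>) \<partial>(P x))
              * ennreal (t powr (- \<beta>)))"
  proof (intro impI allI)
    fix t :: real
    assume hyp: "markov_process P S X \<and> D \<in> sets S \<and> c \<notin> D \<and> space S = insert c D \<and>
        (\<forall>y\<in>space S. \<forall>\<omega>\<in>space (P y). \<forall>t>0. lifetime D X \<omega> \<le> ennreal t \<longrightarrow> X t \<omega> = c) \<and>
        (\<forall>y\<in>space S. stable_subordinator (P y) \<alpha> H) \<and>
        (\<forall>y\<in>space S. independent_processes (P y) S X borel H) \<and>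
        x \<in> D \<and> 0 < \<beta> \<and> \<beta> < \<alpha> \<and>
        lifetime D X \<in> borel_measurable (P x) \<and>
        (\<integral>\<^sup>+\<omega>. epow (lifetime D X \<omega>) (\<beta> / \<alpha>) \<partial>(P x)) < \<top>"
    assume t: "t > 0"
    from hyp have mp: "markov_process P S X" and DS: "D \<in> sets S" and cD: "c \<notin> D"
      and sS: "space S = insert c D"
      and cem0: "\<forall>y\<in>space S. \<forall>\<omega>\<in>space (P y). \<forall>t>0. lifetime D X \<omega> \<le> ennreal t \<longrightarrow> X t \<omega> = c"
      and Hs: "\<forall>y\<in>space S. stable_subordinator (P y) \<alpha> H"
      and ind: "\<forall>y\<in>space S. independent_processes (P y) S X borel H"
      and xD: "x \<in> D" and b: "0 < \<beta>" "\<beta> < \<alpha>"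
      and zm: "lifetime D X \<in> borel_measurable (P x)"
      and fin: "(\<integral>\<^sup>+\<omega>. epow (lifetime D X \<omega>) (\<beta> / \<alpha>) \<partial>(P x)) < \<top>"
      by auto
    have xS: "x \<in> space S" using xD sS by auto
    have Xm: "\<And>t. t \<ge> 0 \<Longrightarrow> X t \<in> measurable (P x) S"
      using mp xS unfolding markov_process_def by auto
    have cS: "{c} \<in> sets S"
    proof -
      have "space S - D \<in> sets S" using DS by auto
      moreover have "space S - D = {c}" using sS cD by auto
      ultimately show ?thesis by simp
    qed
    have cem: "\<And>\<omega> u. \<omega> \<in> space (P x) \<Longrightarrow> u > 0 \<Longrightarrow> lifetime D X \<omega> \<le> ennreal u \<Longrightarrow> X u \<omega> = c"
      using cem0 xS by blast
    show "emeasure (P x) {\<omega>\<in>space (P x). lifetime D (time_change c X H) \<omega> > ennreal t}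
           \<le> ennreal (Gamma (1 - \<beta> / \<alpha>) / Gamma (1 - \<beta>))
              * (\<integral>\<^sup>+\<omega>. epow (lifetime D X \<omega>) (\<beta> / \<alpha>) \<partial>(P x))
              * ennreal (t powr (- \<beta>))"
      using assms by (intro part2_main[OF Xm cS cD cem _ _ _ _ b zm fin t])
        (use Hs ind xS in auto)
  qed
qed

end
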